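(* Let $d,n\in\mathbb{N}$. As differential operators acting on $C_c^\infty(\mathbb{R}^d\setminus\{0\})$, $$U(1-\Delta_{\mathbb{R}^d})^nU^{-1}=\sum_{|\gamma|_1\leq 2n}\partial^{\gamma}M_{p_{\gamma}}$$ for some polynomials $p_\gamma$ of degree at most $4n$; moreover, for $|\gamma|_1=2n$ each $p_\gamma$ is a scalar multiple of $h_{4n}$, while for $|\gamma|_1<2n$ the polynomials $p_\gamma$ have degree strictly less than $4n$.
   Context: $U$ is the unitary operator on $L_2(\mathbb{R}^d)$ given by $(U\xi)(t)=|t|^{-d}\xi(t/|t|^2)$ (note $U=U^{-1}$). $h_z(t)=|t|^z$, $t\in\mathbb{R}^d$ (so $h_{4n}=(|t|^2)^{2n}$ is a polynomial). $\partial^\gamma M_p$ denotes the operator $u\mapsto\partial^\gamma(pu)$, $\partial^\gamma$ being the partial derivative with multi-index $\gamma$; $\Delta_{\mathbb{R}^d}$ is the Laplacian. *)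

theory Defs
  imports "HOL-Analysis.Analysis"
begin

definition pd :: "'d::finite \<Rightarrow> (real^'d \<Rightarrow> complex) \<Rightarrow> (real^'d \<Rightarrow> complex)" where
  "pd i f = (\<lambda>x. vector_derivative (\<lambda>t. f (x + t *\<^sub>R axis i 1)) (at 0))"

fun pdl :: "'d::finite list \<Rightarrow> (real^'d \<Rightarrow> complex) \<Rightarrow> (real^'d \<Rightarrow> complex)" where
  "pdl [] f = f"
| "pdl (i # is) f = pd i (pdl is f)"

text \<open>Multi-index derivative; the order of differentiation is irrelevant for smooth functions.\<close>
definition partial :: "('d::finite \<Rightarrow> nat) \<Rightarrow> (real^'d \<Rightarrow> complex) \<Rightarrow> (real^'d \<Rightarrow> complex)" where
  "partial \<gamma> f = pdl (SOME xs. \<forall>i. count_list xs i = \<gamma> i) f"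

definition mi_norm :: "('d::finite \<Rightarrow> nat) \<Rightarrow> nat" where
  "mi_norm \<gamma> = (\<Sum>i\<in>UNIV. \<gamma> i)"

definition smooth_fun :: "(real^'d::finite \<Rightarrow> complex) \<Rightarrow> bool" where
  "smooth_fun f \<longleftrightarrow> (\<forall>is x. (pdl is f) differentiable (at x))"

definition test_fun :: "(real^'d::finite \<Rightarrow> complex) \<Rightarrow> bool" where
  "test_fun f \<longleftrightarrow> smooth_fun f \<and> compact (closure {x. f x \<noteq> 0}) \<and> 0 \<notin> closure {x. f x \<noteq> 0}"

definition laplacian :: "(real^'d::finite \<Rightarrow> complex) \<Rightarrow> (real^'d \<Rightarrow> complex)" where
  "laplacian f = (\<lambda>x. \<Sum>i\<in>UNIV. pd i (pd i f) x)"

definition one_minus_lap_pow :: "nat \<Rightarrow> (real^'d::finite \<Rightarrow> complex) \<Rightarrow> (real^'d \<Rightarrow> complex)" where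
  "one_minus_lap_pow n = ((\<lambda>f x. f x - laplacian f x) ^^ n)"

text \<open>(U xi)(t) = |t|^{-d} xi(t/|t|^2); U is its own inverse.\<close>
definition U_op :: "(real^'d::finite \<Rightarrow> complex) \<Rightarrow> (real^'d \<Rightarrow> complex)" where
  "U_op \<xi> = (\<lambda>t. complex_of_real (norm t powr (- real CARD('d))) * \<xi> ((1 / (norm t)\<^sup>2) *\<^sub>R t))"

definition mpoly_eval :: "(('d::finite \<Rightarrow> nat) \<Rightarrow> complex) \<Rightarrow> real^'d \<Rightarrow> complex" where
  "mpoly_eval c x = (\<Sum>\<alpha>\<in>{\<alpha>. c \<alpha> \<noteq> 0}. c \<alpha> * (\<Prod>i\<in>UNIV. complex_of_real (x $ i) ^ \<alpha> i))"

definition poly_deg_lt :: "nat \<Rightarrow> (real^'d::finite \<Rightarrow> complex) \<Rightarrow> bool" where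
  "poly_deg_lt N p \<longleftrightarrow> (\<exists>c. finite {\<alpha>. c \<alpha> \<noteq> 0} \<and> (\<forall>\<alpha>. N \<le> mi_norm \<alpha> \<longrightarrow> c \<alpha> = 0) \<and> p = mpoly_eval c)"

definition h_pow :: "nat \<Rightarrow> real^'d::finite \<Rightarrow> complex" where
  "h_pow k x = complex_of_real (norm x ^ k)"

end

theory Submission
  imports Defs
begin


lemma pd_has_derivative:
  assumes "(f has_derivative f') (at x)"
  shows "pd i f x = f' (axis i 1)"
proof -
  have l: "((\<lambda>t::real. x + t *\<^sub>R axis i 1) has_derivative (\<lambda>t. t *\<^sub>R axis i 1)) (at 0)"
    by (auto intro!: derivative_eq_intros)
  have "(f has_derivative f') (at (x + 0 *\<^sub>R axis i 1))" using assms by simp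
  from has_derivative_compose[OF l this]
  have "((\<lambda>t. f (x + t *\<^sub>R axis i 1)) has_derivative (\<lambda>t. f' (t *\<^sub>R axis i 1))) (at 0)" .
  moreover have "(\<lambda>t. f' (t *\<^sub>R axis i 1)) = (\<lambda>t. t *\<^sub>R f' (axis i 1))"
    using has_derivative_bounded_linear[OF assms] by (simp add: linear_simps)
  ultimately have "((\<lambda>t. f (x + t *\<^sub>R axis i 1)) has_vector_derivative f' (axis i 1)) (at 0)"
    by (simp add: has_vector_derivative_def)
  then show ?thesis by (simp add: pd_def vector_derivative_at)
qed

lemma sum_axis: "(\<Sum>j\<in>UNIV. of_real ((axis i 1 :: real^'d) $ j) * (c j :: complex)) = c (i::'d::finite)"
proof -
  have "(\<Sum>j\<in>UNIV. of_real ((axis i 1 :: real^'d) $ j) * c j) = (\<Sum>j\<in>UNIV. if j = i then c j else 0)"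
    by (rule sum.cong) (auto simp: axis_def)
  then show ?thesis by simp
qed

lemma frechet_expand:
  fixes f :: "real^'d::finite \<Rightarrow> complex"
  assumes "f differentiable (at x)"
  shows "(f has_derivative (\<lambda>h. \<Sum>j\<in>UNIV. of_real (h$j) * pd j f x)) (at x)"
proof -
  obtain f' where d: "(f has_derivative f') (at x)" using assms differentiable_def by blast
  have lin: "linear f'" using has_derivative_linear[OF d] .
  have "f' h = (\<Sum>j\<in>UNIV. of_real (h$j) * pd j f x)" for h
  proof -
    have "f' h = f' (\<Sum>j\<in>UNIV. (h$j) *\<^sub>R axis j 1)"
      using basis_expansion[of h] by (simp add: scalar_mult_eq_scaleR)
    also have "\<dots> = (\<Sum>j\<in>UNIV. (h$j) *\<^sub>R f' (axis j 1))"
      using has_derivative_bounded_linear[OF d] by (simp add: linear_sum[OF lin] linear_simps)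
    also have "\<dots> = (\<Sum>j\<in>UNIV. of_real (h$j) * pd j f x)"
      by (simp add: pd_has_derivative[OF d] scaleR_conv_of_real)
    finally show ?thesis .
  qed
  then have "f' = (\<lambda>h. \<Sum>j\<in>UNIV. of_real (h$j) * pd j f x)" by auto
  with d show ?thesis by simp
qed

lemma pd_add:
  fixes f g :: "real^'d::finite \<Rightarrow> complex"
  assumes "f differentiable (at x)" "g differentiable (at x)"
  shows "pd i (\<lambda>y. f y + g y) x = pd i f x + pd i g x"
  using pd_has_derivative[OF has_derivative_add[OF frechet_expand[OF assms(1)] frechet_expand[OF assms(2)]], of i]
  by (simp add: sum_axis sum.distrib)

lemma pd_diff:
  fixes f g :: "real^'d::finite \<Rightarrow> complex"
  assumes "f differentiable (at x)" "g differentiable (at x)"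
  shows "pd i (\<lambda>y. f y - g y) x = pd i f x - pd i g x"
  using pd_has_derivative[OF has_derivative_diff[OF frechet_expand[OF assms(1)] frechet_expand[OF assms(2)]], of i]
  by (simp add: sum_axis sum_subtractf)

lemma pd_mult:
  fixes f g :: "real^'d::finite \<Rightarrow> complex"
  assumes "f differentiable (at x)" "g differentiable (at x)"
  shows "pd i (\<lambda>y. f y * g y) x = pd i f x * g x + f x * pd i g x"
  using pd_has_derivative[OF has_derivative_mult[OF frechet_expand[OF assms(1)] frechet_expand[OF assms(2)]], of i]
  by (simp add: sum_axis)

lemma pd_const: "pd i (\<lambda>y. c) x = 0"
  using pd_has_derivative[OF has_derivative_const, of i c x] by simp

lemma pd_cmult:
  fixes f :: "real^'d::finite \<Rightarrow> complex"
  assumes "f differentiable (at x)"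
  shows "pd i (\<lambda>y. c * f y) x = c * pd i f x"
  using pd_mult[OF differentiable_const assms, of i c] by (simp add: pd_const)

lemma pd_neg:
  fixes f :: "real^'d::finite \<Rightarrow> complex"
  assumes "f differentiable (at x)"
  shows "pd i (\<lambda>y. - f y) x = - pd i f x"
  using pd_cmult[OF assms, of i "-1"] by simp

lemma differentiable_sum_list:
  fixes F :: "'a \<Rightarrow> real^'d::finite \<Rightarrow> complex"
  assumes "\<And>a. a \<in> set as \<Longrightarrow> F a differentiable (at x)"
  shows "(\<lambda>y. \<Sum>a\<leftarrow>as. F a y) differentiable (at x)"
  using assms by (induction as) auto

lemma pd_sum_list:
  fixes F :: "'a \<Rightarrow> real^'d::finite \<Rightarrow> complex"
  assumes "\<And>a. a \<in> set as \<Longrightarrow> F a differentiable (at x)"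
  shows "pd i (\<lambda>y. \<Sum>a\<leftarrow>as. F a y) x = (\<Sum>a\<leftarrow>as. pd i (F a) x)"
  using assms
proof (induction as)
  case Nil
  then show ?case by (simp add: pd_const)
next
  case (Cons a as)
  have "pd i (\<lambda>y. \<Sum>a\<leftarrow>a#as. F a y) x = pd i (\<lambda>y. F a y + (\<Sum>a\<leftarrow>as. F a y)) x" by simp
  also have "\<dots> = pd i (F a) x + pd i (\<lambda>y. \<Sum>a\<leftarrow>as. F a y) x"
    using Cons.prems by (intro pd_add differentiable_sum_list) auto
  finally show ?case using Cons by simp
qed

lemma line_vd:
  fixes f :: "real^'d::finite \<Rightarrow> complex"
  assumes "f differentiable (at (y + s *\<^sub>R axis i 1))"
  shows "((\<lambda>t. f (y + t *\<^sub>R axis i 1)) has_vector_derivative pd i f (y + s *\<^sub>R axis i 1)) (at s)"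
proof -
  have l: "((\<lambda>t::real. y + t *\<^sub>R axis i 1) has_derivative (\<lambda>t. t *\<^sub>R axis i 1)) (at s)"
    by (auto intro!: derivative_eq_intros)
  from has_derivative_compose[OF l frechet_expand[OF assms]]
  have "((\<lambda>t. f (y + t *\<^sub>R axis i 1)) has_derivative
     (\<lambda>t. \<Sum>j\<in>UNIV. of_real ((t *\<^sub>R axis i 1) $ j) * pd j f (y + s *\<^sub>R axis i 1))) (at s)" .
  moreover have "(\<lambda>t. \<Sum>j\<in>UNIV. of_real ((t *\<^sub>R (axis i 1::real^'d)) $ j) * pd j f (y + s *\<^sub>R axis i 1))
      = (\<lambda>t. t *\<^sub>R pd i f (y + s *\<^sub>R axis i 1))"
  proof
    fix t
    have "(\<Sum>j\<in>UNIV. of_real ((t *\<^sub>R (axis i 1::real^'d)) $ j) * pd j f (y + s *\<^sub>R axis i 1))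
        = of_real t * (\<Sum>j\<in>UNIV. of_real (((axis i 1::real^'d)) $ j) * pd j f (y + s *\<^sub>R axis i 1))"
      by (simp add: sum_distrib_left mult.assoc)
    then show "(\<Sum>j\<in>UNIV. of_real ((t *\<^sub>R (axis i 1::real^'d)) $ j) * pd j f (y + s *\<^sub>R axis i 1))
       = t *\<^sub>R pd i f (y + s *\<^sub>R axis i 1)"
      by (simp add: sum_axis scaleR_conv_of_real)
  qed
  ultimately show ?thesis by (simp add: has_vector_derivative_def)
qed

lemma pd_cong_open:
  assumes "open S" "x \<in> S" "\<And>y. y \<in> S \<Longrightarrow> f y = g y"
  shows "pd i f x = pd i g x"
proof -
  have t: "((\<lambda>t::real. x + t *\<^sub>R axis i 1) \<longlongrightarrow> x) (nhds 0)"
  proof -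
    have "isCont (\<lambda>t::real. x + t *\<^sub>R axis i 1) 0" by (intro continuous_intros)
    then show ?thesis using tendsto_at_iff_tendsto_nhds[of "\<lambda>t::real. x + t *\<^sub>R axis i 1" 0]
      by (simp add: isCont_def)
  qed
  have "eventually (\<lambda>y. y \<in> S) (nhds x)" using assms eventually_nhds_in_open by blast
  then have "eventually (\<lambda>t. x + t *\<^sub>R axis i 1 \<in> S) (nhds (0::real))"
    by (rule eventually_compose_filterlim[OF _ t])
  then have "eventually (\<lambda>t. t \<in> UNIV \<longrightarrow> f (x + t *\<^sub>R axis i 1) = g (x + t *\<^sub>R axis i 1)) (nhds (0::real))"
    by eventually_elim (simp add: assms)
  then show ?thesis unfolding pd_def
    by (intro ext vector_derivative_cong_eq) auto
qed

section \<open>Smoothness\<close>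

lemma pdl_append: "pdl (xs @ ys) f = pdl xs (pdl ys f)"
  by (induction xs) auto

lemma pdl_snoc: "pdl (xs @ [i]) f = pdl xs (pd i f)"
  by (simp add: pdl_append)

definition sm :: "nat \<Rightarrow> (real^'d::finite \<Rightarrow> complex) \<Rightarrow> bool" where
  "sm m f \<longleftrightarrow> (\<forall>is x. length is \<le> m \<longrightarrow> pdl is f differentiable (at x))"

lemma smooth_sm: "smooth_fun f \<longleftrightarrow> (\<forall>m. sm m f)"
  unfolding smooth_fun_def sm_def by auto

lemma sm_mono: "sm m f \<Longrightarrow> k \<le> m \<Longrightarrow> sm k f"
  unfolding sm_def by auto

lemma sm_diff0: "sm m f \<Longrightarrow> f differentiable (at x)"
  unfolding sm_def by (metis le0 list.size(3) pdl.simps(1))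

lemma sm_pd: "sm (Suc m) f \<Longrightarrow> sm m (pd i f)"
  unfolding sm_def by (metis length_append_singleton not_less_eq_eq pdl_snoc)

lemma pdl_const: "pdl is (\<lambda>y. c) = (\<lambda>y. if is = [] then c else 0)"
  by (induction "is") (auto simp: pd_const cong: if_cong)

lemma sm_const: "sm m (\<lambda>y. c)"
  unfolding sm_def pdl_const by auto

lemma pdl_add:
  assumes "sm m f" "sm m g" "length is \<le> Suc m"
  shows "pdl is (\<lambda>y. f y + g y) = (\<lambda>y. pdl is f y + pdl is g y)"
  using assms(3)
proof (induction "is")
  case Nil
  then show ?case by simp
next
  case (Cons i "is")
  then have "pdl is (\<lambda>y. f y + g y) = (\<lambda>y. pdl is f y + pdl is g y)" by simp
  moreover have "length is \<le> m" using Cons by simp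
  ultimately show ?case using assms unfolding sm_def by (auto intro!: pd_add)
qed

lemma sm_add:
  assumes "sm m f" "sm m g" shows "sm m (\<lambda>y. f y + g y)"
  unfolding sm_def
proof (intro allI impI)
  fix "is" :: "'a list" and x assume "length is \<le> m"
  then show "pdl is (\<lambda>y. f y + g y) differentiable (at x)"
    using assms pdl_add[OF assms, of "is"] by (auto simp: sm_def)
qed

lemma pdl_cmult:
  assumes "sm m f" "length is \<le> Suc m"
  shows "pdl is (\<lambda>y. c * f y) = (\<lambda>y. c * pdl is f y)"
  using assms(2)
proof (induction "is")
  case Nil
  then show ?case by simp
next
  case (Cons i "is")
  then have "pdl is (\<lambda>y. c * f y) = (\<lambda>y. c * pdl is f y)" by simp
  moreover have "length is \<le> m" using Cons by simp
  ultimately show ?case using assms unfolding sm_def by (auto intro!: pd_cmult)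
qed

lemma sm_mult: "sm m f \<Longrightarrow> sm m g \<Longrightarrow> sm m (\<lambda>y. f y * g y)"
proof (induction m arbitrary: f g)
  case 0
  then show ?case unfolding sm_def by auto
next
  case (Suc m)
  show ?case unfolding sm_def
  proof (intro allI impI)
    fix "is" :: "'a list" and x
    assume len: "length is \<le> Suc m"
    show "pdl is (\<lambda>y. f y * g y) differentiable (at x)"
    proof (cases "is" rule: rev_exhaust)
      case Nil
      then show ?thesis using Suc.prems by (auto intro!: differentiable_mult dest: sm_diff0)
    next
      case (snoc js i)
      have df: "\<And>y. f differentiable (at y)" and dg: "\<And>y. g differentiable (at y)"
        using Suc.prems sm_diff0 by blast+
      have "pd i (\<lambda>y. f y * g y) = (\<lambda>y. pd i f y * g y + f y * pd i g y)"
        using pd_mult[OF df dg] by auto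
      moreover have "sm m (\<lambda>y. pd i f y * g y + f y * pd i g y)"
        using Suc.prems by (intro sm_add Suc.IH) (auto intro: sm_pd sm_mono)
      ultimately show ?thesis using snoc len unfolding sm_def by (simp add: pdl_snoc)
    qed
  qed
qed

lemma sm_cmult: "sm m f \<Longrightarrow> sm m (\<lambda>y. c * f y)"
  using sm_mult[OF sm_const] by blast

lemma smooth_add: "smooth_fun f \<Longrightarrow> smooth_fun g \<Longrightarrow> smooth_fun (\<lambda>y. f y + g y)"
  by (simp add: smooth_sm sm_add)

lemma smooth_mult: "smooth_fun f \<Longrightarrow> smooth_fun g \<Longrightarrow> smooth_fun (\<lambda>y. f y * g y)"
  by (simp add: smooth_sm sm_mult)

lemma smooth_const: "smooth_fun (\<lambda>y. c)"
  by (simp add: smooth_sm sm_const)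

lemma smooth_cmult: "smooth_fun f \<Longrightarrow> smooth_fun (\<lambda>y. c * f y)"
  by (simp add: smooth_sm sm_cmult)

lemma smooth_pd: "smooth_fun f \<Longrightarrow> smooth_fun (pd i f)"
  by (meson sm_pd smooth_sm)

lemma smooth_pdl: "smooth_fun f \<Longrightarrow> smooth_fun (pdl is f)"
  by (induction "is") (auto intro: smooth_pd)

lemma smooth_diff: "smooth_fun f \<Longrightarrow> f differentiable (at x)"
  unfolding smooth_fun_def by (metis pdl.simps(1))

lemma smooth_sum_list:
  "(\<And>a. a \<in> set as \<Longrightarrow> smooth_fun (F a)) \<Longrightarrow> smooth_fun (\<lambda>y. \<Sum>a\<leftarrow>as. F a y)"
  by (induction as) (auto intro: smooth_add smooth_const)

lemma pdl_add_s: "smooth_fun f \<Longrightarrow> smooth_fun g \<Longrightarrow> pdl is (\<lambda>y. f y + g y) = (\<lambda>y. pdl is f y + pdl is g y)"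
  using pdl_add[of "length is" f g "is"] smooth_sm by auto

lemma pdl_cmult_s: "smooth_fun f \<Longrightarrow> pdl is (\<lambda>y. c * f y) = (\<lambda>y. c * pdl is f y)"
  using pdl_cmult[of "length is" f "is"] smooth_sm by auto

lemma pdl_sum_list:
  assumes "\<And>a. a \<in> set as \<Longrightarrow> smooth_fun (F a)"
  shows "pdl is (\<lambda>y. \<Sum>a\<leftarrow>as. F a y) = (\<lambda>y. \<Sum>a\<leftarrow>as. pdl is (F a) y)"
  using assms
proof (induction as)
  case Nil
  then show ?case by (simp add: pdl_const)
next
  case (Cons a as)
  then show ?case by (simp add: pdl_add_s smooth_sum_list)
qed

section \<open>Symmetry of second derivatives\<close>

lemma mvt_vd:
  fixes g :: "real \<Rightarrow> complex"
  assumes "a < b" "\<And>t. (g has_vector_derivative g' t) (at t)"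
  shows "\<exists>t\<in>{a<..<b}. norm (g b - g a) \<le> (b - a) * norm (g' t)"
proof -
  have "continuous_on {a..b} g"
    using assms(2) has_vector_derivative_continuous by (blast intro: continuous_at_imp_continuous_on)
  from mvt_general[OF assms(1) this, of "\<lambda>t h. h *\<^sub>R g' t"] assms
  obtain t where "t \<in> {a<..<b}" "norm (g b - g a) \<le> norm ((b - a) *\<^sub>R g' t)"
    by (auto simp: has_vector_derivative_def)
  then show ?thesis using assms(1) by auto
qed

lemma clairaut_aux:
  fixes f :: "real^'d::finite \<Rightarrow> complex"
  assumes sf: "smooth_fun f" and h: "0 < h"
    and bd: "\<And>\<sigma> \<tau>. 0 \<le> \<sigma> \<Longrightarrow> \<sigma> \<le> h \<Longrightarrow> 0 \<le> \<tau> \<Longrightarrow> \<tau> \<le> h \<Longrightarrow>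
       norm (pd j (pd i f) (x + \<sigma> *\<^sub>R axis i 1 + \<tau> *\<^sub>R axis j 1) - A) \<le> e"
  shows "norm (f (x + h *\<^sub>R axis j 1 + h *\<^sub>R axis i 1) - f (x + h *\<^sub>R axis i 1)
           - f (x + h *\<^sub>R axis j 1) + f x - (h*h) *\<^sub>R A) \<le> e * (h*h)"
proof -
  define a :: "real^'d" where "a = axis i 1"
  define b :: "real^'d" where "b = axis j 1"
  define P where "P = pd i f"
  have df: "\<And>z. f differentiable (at z)" using sf smooth_diff by blast
  have dP: "\<And>z. P differentiable (at z)" unfolding P_def using sf smooth_diff smooth_pd by blast
  define \<psi> where "\<psi> \<sigma> = f ((x + h *\<^sub>R b) + \<sigma> *\<^sub>R a) - f (x + \<sigma> *\<^sub>R a) - (\<sigma> * h) *\<^sub>R A" for \<sigma>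
  have d\<psi>: "(\<psi> has_vector_derivative (P ((x + h *\<^sub>R b) + \<sigma> *\<^sub>R a) - P (x + \<sigma> *\<^sub>R a) - h *\<^sub>R A)) (at \<sigma>)" for \<sigma>
  proof -
    have 1: "((\<lambda>\<sigma>. f ((x + h *\<^sub>R b) + \<sigma> *\<^sub>R a)) has_vector_derivative P ((x + h *\<^sub>R b) + \<sigma> *\<^sub>R a)) (at \<sigma>)"
      unfolding P_def a_def by (rule line_vd[OF df])
    have 2: "((\<lambda>\<sigma>. f (x + \<sigma> *\<^sub>R a)) has_vector_derivative P (x + \<sigma> *\<^sub>R a)) (at \<sigma>)"
      unfolding P_def a_def by (rule line_vd[OF df])
    have 3: "((\<lambda>\<sigma>. (\<sigma> * h) *\<^sub>R A) has_vector_derivative h *\<^sub>R A) (at \<sigma>)"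
      unfolding has_vector_derivative_def
      by (auto intro!: derivative_eq_intros simp: algebra_simps)
    show ?thesis unfolding \<psi>_def
      by (intro has_vector_derivative_diff 1 2 3)
  qed
  obtain \<sigma>0 where s0: "\<sigma>0 \<in> {0<..<h}"
    and m1: "norm (\<psi> h - \<psi> 0) \<le> (h - 0) * norm (P ((x + h *\<^sub>R b) + \<sigma>0 *\<^sub>R a) - P (x + \<sigma>0 *\<^sub>R a) - h *\<^sub>R A)"
    using mvt_vd[OF h d\<psi>] by blast
  define chf where "chf \<tau> = P ((x + \<sigma>0 *\<^sub>R a) + \<tau> *\<^sub>R b) - \<tau> *\<^sub>R A" for \<tau>
  have dchf: "(chf has_vector_derivative (pd j P ((x + \<sigma>0 *\<^sub>R a) + \<tau> *\<^sub>R b) - A)) (at \<tau>)" for \<tau>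
  proof -
    have 1: "((\<lambda>\<tau>. P ((x + \<sigma>0 *\<^sub>R a) + \<tau> *\<^sub>R b)) has_vector_derivative pd j P ((x + \<sigma>0 *\<^sub>R a) + \<tau> *\<^sub>R b)) (at \<tau>)"
      unfolding b_def by (rule line_vd[OF dP])
    have 3: "((\<lambda>\<tau>. \<tau> *\<^sub>R A) has_vector_derivative A) (at \<tau>)"
      unfolding has_vector_derivative_def
      by (auto intro!: derivative_eq_intros)
    show ?thesis unfolding chf_def
      by (intro has_vector_derivative_diff 1 3)
  qed
  obtain \<tau>0 where t0: "\<tau>0 \<in> {0<..<h}"
    and m2: "norm (chf h - chf 0) \<le> (h - 0) * norm (pd j P ((x + \<sigma>0 *\<^sub>R a) + \<tau>0 *\<^sub>R b) - A)"
    using mvt_vd[OF h dchf] by blast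
  have "norm (pd j P ((x + \<sigma>0 *\<^sub>R a) + \<tau>0 *\<^sub>R b) - A) \<le> e"
    using bd[of \<sigma>0 \<tau>0] s0 t0 unfolding P_def a_def b_def by auto
  with h have "h * norm (pd j P ((x + \<sigma>0 *\<^sub>R a) + \<tau>0 *\<^sub>R b) - A) \<le> h * e"
    by (intro mult_left_mono) auto
  with m2 have m2': "norm (chf h - chf 0) \<le> h * e" by simp
  have "chf h - chf 0 = P ((x + h *\<^sub>R b) + \<sigma>0 *\<^sub>R a) - P (x + \<sigma>0 *\<^sub>R a) - h *\<^sub>R A"
    unfolding chf_def by (simp add: algebra_simps)
  with m2' h have "h * norm (P ((x + h *\<^sub>R b) + \<sigma>0 *\<^sub>R a) - P (x + \<sigma>0 *\<^sub>R a) - h *\<^sub>R A) \<le> h * (h * e)"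
    by (intro mult_left_mono) auto
  with m1 have "norm (\<psi> h - \<psi> 0) \<le> h * (h * e)" by simp
  moreover have "\<psi> h - \<psi> 0 = f (x + h *\<^sub>R axis j 1 + h *\<^sub>R axis i 1) - f (x + h *\<^sub>R axis i 1)
           - f (x + h *\<^sub>R axis j 1) + f x - (h*h) *\<^sub>R A"
    unfolding \<psi>_def a_def b_def by simp
  ultimately show ?thesis by (simp add: algebra_simps)
qed

lemma clairaut:
  fixes f :: "real^'d::finite \<Rightarrow> complex"
  assumes sf: "smooth_fun f"
  shows "pd j (pd i f) x = pd i (pd j f) x"
proof (rule ccontr)
  define A where "A = pd j (pd i f) x"
  define B where "B = pd i (pd j f) x"
  assume "pd j (pd i f) x \<noteq> pd i (pd j f) x"
  then have AB: "norm (A - B) > 0" by (simp add: A_def B_def)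
  define e where "e = norm (A - B) / 4"
  have e: "e > 0" using AB by (simp add: e_def)
  have cA: "continuous (at x) (pd j (pd i f))"
    using smooth_diff[OF smooth_pd[OF smooth_pd[OF sf]]] differentiable_imp_continuous_within by blast
  have cB: "continuous (at x) (pd i (pd j f))"
    using smooth_diff[OF smooth_pd[OF smooth_pd[OF sf]]] differentiable_imp_continuous_within by blast
  obtain d1 where d1: "d1 > 0" "\<And>z. dist z x < d1 \<Longrightarrow> dist (pd j (pd i f) z) A < e"
    using cA e unfolding continuous_at_eps_delta A_def by blast
  obtain d2 where d2: "d2 > 0" "\<And>z. dist z x < d2 \<Longrightarrow> dist (pd i (pd j f) z) B < e"
    using cB e unfolding continuous_at_eps_delta B_def by blast
  define h where "h = min d1 d2 / 4"
  have h: "h > 0" using d1 d2 by (simp add: h_def)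
  have near: "dist (x + \<sigma> *\<^sub>R axis k 1 + \<tau> *\<^sub>R axis l 1) x < min d1 d2"
    if "0 \<le> \<sigma>" "\<sigma> \<le> h" "0 \<le> \<tau>" "\<tau> \<le> h" for \<sigma> \<tau> and k l :: 'd
  proof -
    have "dist (x + \<sigma> *\<^sub>R axis k 1 + \<tau> *\<^sub>R axis l 1) x = norm (\<sigma> *\<^sub>R axis k (1::real) + \<tau> *\<^sub>R axis l 1)"
      by (simp add: dist_norm)
    also have "\<dots> \<le> norm (\<sigma> *\<^sub>R axis k (1::real)) + norm (\<tau> *\<^sub>R axis l (1::real))"
      by (rule norm_triangle_ineq)
    also have "\<dots> = \<sigma> + \<tau>" using that by simp
    also have "\<dots> < min d1 d2" using that h d1 d2 unfolding h_def by linarith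
    finally show ?thesis .
  qed
  have 1: "norm (f (x + h *\<^sub>R axis j 1 + h *\<^sub>R axis i 1) - f (x + h *\<^sub>R axis i 1)
           - f (x + h *\<^sub>R axis j 1) + f x - (h*h) *\<^sub>R A) \<le> e * (h*h)"
    using near d1 by (intro clairaut_aux[OF sf h]) (auto simp: dist_norm intro: less_imp_le)
  have 2: "norm (f (x + h *\<^sub>R axis i 1 + h *\<^sub>R axis j 1) - f (x + h *\<^sub>R axis j 1)
           - f (x + h *\<^sub>R axis i 1) + f x - (h*h) *\<^sub>R B) \<le> e * (h*h)"
    using near d2 by (intro clairaut_aux[OF sf h]) (auto simp: dist_norm intro: less_imp_le)
  have eq: "x + h *\<^sub>R axis i 1 + h *\<^sub>R axis j 1 = x + h *\<^sub>R axis j 1 + h *\<^sub>R axis i 1"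
    by (simp add: algebra_simps)
  have "(h*h) *\<^sub>R (A - B) = (f (x + h *\<^sub>R axis i 1 + h *\<^sub>R axis j 1) - f (x + h *\<^sub>R axis j 1)
           - f (x + h *\<^sub>R axis i 1) + f x - (h*h) *\<^sub>R B) -
       (f (x + h *\<^sub>R axis j 1 + h *\<^sub>R axis i 1) - f (x + h *\<^sub>R axis i 1)
           - f (x + h *\<^sub>R axis j 1) + f x - (h*h) *\<^sub>R A)"
    unfolding eq by (simp add: algebra_simps)
  then have "norm ((h*h) *\<^sub>R (A - B)) \<le> e * (h*h) + e * (h*h)"
    using 1 2 norm_triangle_ineq4 by (smt (verit))
  moreover have "norm ((h*h) *\<^sub>R (A - B)) = (h*h) * norm (A - B)" using h by simp
  ultimately have "(h*h) * norm (A - B) \<le> (h*h) * (2*e)" by (simp add: algebra_simps)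
  then have "norm (A - B) \<le> 2 * e" using h by (simp add: mult_le_cancel_left_pos)
  then show False using AB unfolding e_def by simp
qed

lemma pdl_move:
  assumes "smooth_fun f"
  shows "pdl (ys @ a # zs) f = pd a (pdl (ys @ zs) f)"
proof (induction ys)
  case Nil
  then show ?case by simp
next
  case (Cons y ys)
  have "pdl ((y # ys) @ a # zs) f = pd y (pd a (pdl (ys @ zs) f))" using Cons by simp
  also have "\<dots> = pd a (pd y (pdl (ys @ zs) f))"
    using clairaut[OF smooth_pdl[OF assms]] by auto
  finally show ?case by simp
qed

lemma pdl_perm:
  assumes "smooth_fun f"
  shows "mset xs = mset ys \<Longrightarrow> pdl xs f = pdl ys f"
proof (induction xs arbitrary: ys)
  case Nil
  then show ?case by simp
next
  case (Cons a xs)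
  then have "a \<in> set ys" by (metis list.set_intros(1) set_mset_mset)
  then obtain ys1 ys2 where ys: "ys = ys1 @ a # ys2" by (meson split_list)
  then have "mset xs = mset (ys1 @ ys2)" using Cons.prems by simp
  then have "pdl xs f = pdl (ys1 @ ys2) f" using Cons.IH by blast
  then show ?case using ys pdl_move[OF assms] by simp
qed

lemma partial_eq:
  assumes "smooth_fun f"
  shows "partial (count_list xs) f = pdl xs f"
proof -
  let ?ys = "SOME ys. \<forall>i. count_list ys i = count_list xs i"
  have "\<forall>i. count_list ?ys i = count_list xs i" by (rule someI[of _ xs]) simp
  then have "mset ?ys = mset xs" by (intro multiset_eqI) (simp add: count_mset)
  then show ?thesis unfolding partial_def using pdl_perm[OF assms] by blast
qed

lemma mi_norm_count: "mi_norm (count_list xs) = length (xs :: 'd::finite list)"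
proof (induction xs)
  case Nil
  then show ?case by (simp add: mi_norm_def)
next
  case (Cons a xs)
  have "mi_norm (count_list (a # xs)) = (\<Sum>i\<in>UNIV. (if a = i then 1 else 0) + count_list xs i)"
    unfolding mi_norm_def by (intro sum.cong) auto
  also have "\<dots> = 1 + mi_norm (count_list xs)"
    unfolding mi_norm_def sum.distrib by simp
  finally show ?case using Cons by (simp del: count_list.simps)
qed

section \<open>Polynomials\<close>

inductive PolyD :: "nat \<Rightarrow> (real^'d::finite \<Rightarrow> complex) \<Rightarrow> bool" where
  pconst: "PolyD a (\<lambda>x. c)"
| padd: "PolyD a p \<Longrightarrow> PolyD a q \<Longrightarrow> PolyD a (\<lambda>x. p x + q x)"
| pvar: "PolyD a p \<Longrightarrow> PolyD (Suc a) (\<lambda>x. of_real (x$i) * p x)"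
| pmono: "PolyD a p \<Longrightarrow> a \<le> b \<Longrightarrow> PolyD b p"

lemma PolyD_cmult: "PolyD a p \<Longrightarrow> PolyD a (\<lambda>x. c * p x)"
proof (induction rule: PolyD.induct)
  case (pconst a c)
  then show ?case using PolyD.pconst by auto
next
  case (padd a p q)
  then show ?case using PolyD.padd[of a "\<lambda>x. c * p x" "\<lambda>x. c * q x"] by (simp add: distrib_left)
next
  case (pvar a p i)
  then show ?case using PolyD.pvar[of a "\<lambda>x. c * p x" i] by (simp add: algebra_simps)
next
  case (pmono a p b)
  then show ?case using PolyD.pmono by blast
qed

lemma PolyD_mult: "PolyD a p \<Longrightarrow> PolyD b q \<Longrightarrow> PolyD (a + b) (\<lambda>x. p x * q x)"
proof (induction rule: PolyD.induct)
  case (pconst a c)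
  then show ?case using PolyD_cmult PolyD.pmono by (metis le_add2)
next
  case (padd a p1 p2)
  then show ?case using PolyD.padd[of "a+b" "\<lambda>x. p1 x * q x" "\<lambda>x. p2 x * q x"] by (simp add: distrib_right)
next
  case (pvar a p i)
  then show ?case using PolyD.pvar[of "a+b" "\<lambda>x. p x * q x" i] by (simp add: algebra_simps)
next
  case (pmono a p c)
  then show ?case using PolyD.pmono by (metis add_le_mono1)
qed

lemma PolyD_zero: "PolyD a (\<lambda>x. 0)"
  using PolyD.pconst .

lemma PolyD_sum_list: "(\<And>t. t \<in> set ts \<Longrightarrow> PolyD a (F t)) \<Longrightarrow> PolyD a (\<lambda>x. \<Sum>t\<leftarrow>ts. F t x)"
  by (induction ts) (auto intro: PolyD.padd PolyD.pconst)

lemma PolyD_sum: "finite S \<Longrightarrow> (\<And>t. t \<in> S \<Longrightarrow> PolyD a (F t)) \<Longrightarrow> PolyD a (\<lambda>x. \<Sum>t\<in>S. F t x)"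
  by (induction rule: finite_induct) (auto intro: PolyD.padd PolyD.pconst)

lemma coord_hasder: "((\<lambda>x::real^'d::finite. complex_of_real (x$i)) has_derivative (\<lambda>h. complex_of_real (h$i))) (at y)"
proof -
  have "bounded_linear (\<lambda>h::real^'d. complex_of_real (h$i))"
    using bounded_linear_compose[OF bounded_linear_of_real bounded_linear_vec_nth[of i]] by simp
  then show ?thesis by (rule bounded_linear_imp_has_derivative)
qed

lemma pd_coord: "pd j (\<lambda>x::real^'d::finite. complex_of_real (x$i)) y = (if j = i then 1 else 0)"
  using pd_has_derivative[OF coord_hasder, of j i y] by (simp add: axis_def)

lemma smooth_coord: "smooth_fun (\<lambda>x::real^'d::finite. complex_of_real (x$i))"
  unfolding smooth_fun_def
proof (intro allI)
  fix "is" :: "'d list" and x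
  show "pdl is (\<lambda>x. complex_of_real (x$i)) differentiable (at x)"
  proof (cases "is" rule: rev_exhaust)
    case Nil
    then show ?thesis using coord_hasder by (auto simp: differentiable_def)
  next
    case (snoc js j)
    have "pd j (\<lambda>x::real^'d. complex_of_real (x$i)) = (\<lambda>y. if j = i then 1 else 0)"
      by (simp add: fun_eq_iff pd_coord)
    then show ?thesis using snoc by (simp add: pdl_snoc pdl_const)
  qed
qed

lemma PolyD_smooth: "PolyD a p \<Longrightarrow> smooth_fun p"
  by (induction rule: PolyD.induct) (auto intro: smooth_const smooth_add smooth_mult smooth_coord)

lemma PolyD_pd: "PolyD a p \<Longrightarrow> PolyD (a - 1) (pd i p) \<and> (a = 0 \<longrightarrow> pd i p = (\<lambda>x. 0))"
proof (induction rule: PolyD.induct)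
  case (pconst a c)
  then show ?case by (auto simp: pd_const intro: PolyD.pconst)
next
  case (padd a p q)
  have "pd i (\<lambda>x. p x + q x) = (\<lambda>x. pd i p x + pd i q x)"
    using padd.hyps PolyD_smooth smooth_diff by (blast intro: pd_add)
  then show ?case using padd.IH by (auto intro: PolyD.padd)
next
  case (pvar a p j)
  have "pd i (\<lambda>x. complex_of_real (x$j) * p x) y = (if i = j then 1 else 0) * p y + complex_of_real (y$j) * pd i p y" for y
  proof -
    have dp: "p differentiable (at y)" using pvar.hyps PolyD_smooth smooth_diff by blast
    have dc: "(\<lambda>x::real^'a. complex_of_real (x$j)) differentiable (at y)" using smooth_coord smooth_diff by blast
    show ?thesis using pd_mult[OF dc dp, of i] by (simp add: pd_coord)
  qed
  then have "pd i (\<lambda>x. complex_of_real (x$j) * p x) = (\<lambda>x. (if i = j then 1 else 0) * p x + complex_of_real (x$j) * pd i p x)"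
    by (rule ext)
  moreover have "PolyD a (\<lambda>x. complex_of_real (x$j) * pd i p x)"
  proof (cases a)
    case 0
    then show ?thesis using pvar.IH by (simp add: PolyD.pconst)
  next
    case (Suc b)
    then show ?thesis using pvar.IH PolyD.pvar[of b "pd i p" j] by simp
  qed
  ultimately show ?case using pvar.hyps by (auto intro!: PolyD.padd PolyD_cmult)
next
  case (pmono a p b)
  then show ?case by (auto intro: PolyD.pmono)
qed

lemma PolyD_pd': "PolyD (Suc a) p \<Longrightarrow> PolyD a (pd i p)"
  using PolyD_pd by fastforce

lemma PolyD_pd0: "PolyD 0 p \<Longrightarrow> pd i p = (\<lambda>x. 0)"
  using PolyD_pd by fastforce

definition mon :: "('d::finite \<Rightarrow> nat) \<Rightarrow> real^'d \<Rightarrow> complex" where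
  "mon \<alpha> x = (\<Prod>i\<in>UNIV. complex_of_real (x $ i) ^ \<alpha> i)"

lemma mpoly_eval_superset:
  assumes "finite S" "{\<alpha>. c \<alpha> \<noteq> 0} \<subseteq> S"
  shows "mpoly_eval c x = (\<Sum>\<alpha>\<in>S. c \<alpha> * mon \<alpha> x)"
  unfolding mpoly_eval_def mon_def
  by (rule sum.mono_neutral_left) (use assms in auto)

lemma mi_norm_upd: "mi_norm (\<alpha>(i := v)) + \<alpha> i = mi_norm \<alpha> + v"
proof -
  have "mi_norm (\<alpha>(i := v)) = v + (\<Sum>j\<in>UNIV - {i}. (\<alpha>(i := v)) j)"
    unfolding mi_norm_def by (subst sum.remove[of UNIV i]) auto
  moreover have "mi_norm \<alpha> = \<alpha> i + (\<Sum>j\<in>UNIV - {i}. \<alpha> j)"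
    unfolding mi_norm_def by (subst sum.remove[of UNIV i]) auto
  moreover have "(\<Sum>j\<in>UNIV - {i}. (\<alpha>(i := v)) j) = (\<Sum>j\<in>UNIV - {i}. \<alpha> j)"
    by (rule sum.cong) auto
  ultimately show ?thesis by simp
qed

lemma mon_shift: "mon (\<alpha>(i := Suc (\<alpha> i))) x = complex_of_real (x $ i) * mon \<alpha> x"
proof -
  have "mon (\<alpha>(i := Suc (\<alpha> i))) x = complex_of_real (x $ i) ^ Suc (\<alpha> i) *
      (\<Prod>j\<in>UNIV - {i}. complex_of_real (x $ j) ^ (\<alpha>(i := Suc (\<alpha> i))) j)"
    unfolding mon_def by (subst prod.remove[of UNIV i]) auto
  moreover have "mon \<alpha> x = complex_of_real (x $ i) ^ \<alpha> i * (\<Prod>j\<in>UNIV - {i}. complex_of_real (x $ j) ^ \<alpha> j)"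
    unfolding mon_def by (subst prod.remove[of UNIV i]) auto
  moreover have "(\<Prod>j\<in>UNIV - {i}. complex_of_real (x $ j) ^ (\<alpha>(i := Suc (\<alpha> i))) j) = (\<Prod>j\<in>UNIV - {i}. complex_of_real (x $ j) ^ \<alpha> j)"
    by (rule prod.cong) auto
  ultimately show ?thesis by simp
qed

lemma pdl_const_poly: "poly_deg_lt (Suc a) (\<lambda>x::real^'d::finite. c)"
proof -
  define c0 :: "('d \<Rightarrow> nat) \<Rightarrow> complex" where "c0 = (\<lambda>\<alpha>. if \<alpha> = (\<lambda>_. 0) then c else 0)"
  have s: "{\<alpha>. c0 \<alpha> \<noteq> 0} \<subseteq> {\<lambda>_. 0}" by (auto simp: c0_def split: if_splits)
  then have fin: "finite {\<alpha>. c0 \<alpha> \<noteq> 0}" by (rule finite_subset) simp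
  have "mpoly_eval c0 x = c" for x
    using mpoly_eval_superset[OF _ s, of x] by (simp add: c0_def mon_def)
  moreover have "\<forall>\<alpha>. Suc a \<le> mi_norm \<alpha> \<longrightarrow> c0 \<alpha> = 0"
    by (auto simp: c0_def mi_norm_def)
  ultimately show ?thesis unfolding poly_deg_lt_def using fin by (intro exI[of _ c0]) auto
qed

lemma poly_add:
  assumes "poly_deg_lt N p" "poly_deg_lt N q"
  shows "poly_deg_lt N (\<lambda>x. p x + q x)"
proof -
  obtain c where c: "finite {\<alpha>. c \<alpha> \<noteq> 0}" "\<forall>\<alpha>. N \<le> mi_norm \<alpha> \<longrightarrow> c \<alpha> = 0" "p = mpoly_eval c"
    using assms(1) unfolding poly_deg_lt_def by blast
  obtain d where d: "finite {\<alpha>. d \<alpha> \<noteq> 0}" "\<forall>\<alpha>. N \<le> mi_norm \<alpha> \<longrightarrow> d \<alpha> = 0" "q = mpoly_eval d"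
    using assms(2) unfolding poly_deg_lt_def by blast
  define S where "S = {\<alpha>. c \<alpha> \<noteq> 0} \<union> {\<alpha>. d \<alpha> \<noteq> 0}"
  have fS: "finite S" using c d by (simp add: S_def)
  have s3: "{\<alpha>. c \<alpha> + d \<alpha> \<noteq> 0} \<subseteq> S" by (auto simp: S_def)
  have "mpoly_eval (\<lambda>\<alpha>. c \<alpha> + d \<alpha>) x = p x + q x" for x
    using mpoly_eval_superset[OF fS s3, of x] mpoly_eval_superset[OF fS, of c x] mpoly_eval_superset[OF fS, of d x] c d
    by (simp add: S_def sum.distrib distrib_right)
  moreover have "finite {\<alpha>. c \<alpha> + d \<alpha> \<noteq> 0}" using fS s3 finite_subset by blast
  ultimately show ?thesis unfolding poly_deg_lt_def using c d
    by (intro exI[of _ "\<lambda>\<alpha>. c \<alpha> + d \<alpha>"]) auto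
qed

lemma poly_var:
  assumes "poly_deg_lt N p"
  shows "poly_deg_lt (Suc N) (\<lambda>x. complex_of_real (x $ i) * p x)"
proof -
  obtain c where c: "finite {\<alpha>. c \<alpha> \<noteq> 0}" "\<forall>\<alpha>. N \<le> mi_norm \<alpha> \<longrightarrow> c \<alpha> = 0" "p = mpoly_eval c"
    using assms(1) unfolding poly_deg_lt_def by blast
  define sh where "sh = (\<lambda>\<alpha>::'a \<Rightarrow> nat. \<alpha>(i := Suc (\<alpha> i)))"
  define c' where "c' = (\<lambda>\<beta>. if 0 < \<beta> i then c (\<beta>(i := \<beta> i - 1)) else 0)"
  have supp: "{\<beta>. c' \<beta> \<noteq> 0} = sh ` {\<alpha>. c \<alpha> \<noteq> 0}"
  proof
    show "{\<beta>. c' \<beta> \<noteq> 0} \<subseteq> sh ` {\<alpha>. c \<alpha> \<noteq> 0}"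
    proof
      fix \<beta> assume "\<beta> \<in> {\<beta>. c' \<beta> \<noteq> 0}"
      then have "0 < \<beta> i" "c (\<beta>(i := \<beta> i - 1)) \<noteq> 0" by (auto simp: c'_def split: if_splits)
      moreover have "sh (\<beta>(i := \<beta> i - 1)) = \<beta>" using calculation by (auto simp: sh_def)
      ultimately show "\<beta> \<in> sh ` {\<alpha>. c \<alpha> \<noteq> 0}" by (metis (mono_tags) image_eqI mem_Collect_eq)
    qed
    show "sh ` {\<alpha>. c \<alpha> \<noteq> 0} \<subseteq> {\<beta>. c' \<beta> \<noteq> 0}"
    proof
      fix \<beta> assume "\<beta> \<in> sh ` {\<alpha>. c \<alpha> \<noteq> 0}"
      then obtain \<alpha> where "c \<alpha> \<noteq> 0" "\<beta> = sh \<alpha>" by auto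
      moreover have "(sh \<alpha>)(i := sh \<alpha> i - 1) = \<alpha>" by (auto simp: sh_def)
      ultimately show "\<beta> \<in> {\<beta>. c' \<beta> \<noteq> 0}" by (simp add: c'_def sh_def)
    qed
  qed
  have inj: "inj sh" unfolding sh_def inj_def
    by (metis fun_upd_same fun_upd_triv fun_upd_upd old.nat.inject)
  have fin': "finite {\<beta>. c' \<beta> \<noteq> 0}" using supp c(1) by simp
  have "mpoly_eval c' x = complex_of_real (x $ i) * p x" for x
  proof -
    have "mpoly_eval c' x = (\<Sum>\<beta>\<in>sh ` {\<alpha>. c \<alpha> \<noteq> 0}. c' \<beta> * mon \<beta> x)"
      using mpoly_eval_superset[OF fin', of c' x] supp by simp
    also have "\<dots> = (\<Sum>\<alpha>\<in>{\<alpha>. c \<alpha> \<noteq> 0}. c' (sh \<alpha>) * mon (sh \<alpha>) x)"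
      using sum.reindex[OF inj_on_subset[OF inj], of "{\<alpha>. c \<alpha> \<noteq> 0}" "\<lambda>\<beta>. c' \<beta> * mon \<beta> x"]
      by (simp add: comp_def)
    also have "\<dots> = (\<Sum>\<alpha>\<in>{\<alpha>. c \<alpha> \<noteq> 0}. complex_of_real (x $ i) * (c \<alpha> * mon \<alpha> x))"
    proof (rule sum.cong)
      fix \<alpha> assume "\<alpha> \<in> {\<alpha>. c \<alpha> \<noteq> 0}"
      have "(sh \<alpha>)(i := sh \<alpha> i - 1) = \<alpha>" by (auto simp: sh_def)
      then show "c' (sh \<alpha>) * mon (sh \<alpha>) x = complex_of_real (x $ i) * (c \<alpha> * mon \<alpha> x)"
        unfolding sh_def by (simp add: c'_def mon_shift[unfolded sh_def])
    qed simp
    also have "\<dots> = complex_of_real (x $ i) * p x"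
      using mpoly_eval_superset[OF c(1), of c x] c(3) by (simp add: sum_distrib_left)
    finally show ?thesis .
  qed
  moreover have "\<forall>\<beta>. Suc N \<le> mi_norm \<beta> \<longrightarrow> c' \<beta> = 0"
  proof (intro allI impI)
    fix \<beta> :: "'a \<Rightarrow> nat" assume b: "Suc N \<le> mi_norm \<beta>"
    show "c' \<beta> = 0"
    proof (cases "0 < \<beta> i")
      case True
      have "mi_norm (\<beta>(i := \<beta> i - 1)) + \<beta> i = mi_norm \<beta> + (\<beta> i - 1)" by (rule mi_norm_upd)
      then have "N \<le> mi_norm (\<beta>(i := \<beta> i - 1))" using b True by linarith
      then show ?thesis using c(2) by (simp add: c'_def)
    qed (simp add: c'_def)
  qed
  ultimately show ?thesis unfolding poly_deg_lt_def using fin'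
    by (intro exI[of _ c']) auto
qed

lemma poly_mono: "poly_deg_lt a p \<Longrightarrow> a \<le> b \<Longrightarrow> poly_deg_lt b p"
  unfolding poly_deg_lt_def by (metis order_trans)


lemma PolyD_poly: "PolyD a p \<Longrightarrow> poly_deg_lt (Suc a) p"
  by (induction rule: PolyD.induct) (auto intro: pdl_const_poly poly_add poly_var poly_mono)

lemma h2_sum: "h_pow 2 x = (\<Sum>i\<in>UNIV. complex_of_real (x$i) * complex_of_real (x$i))"
proof -
  have "norm x ^ 2 = (\<Sum>i\<in>UNIV. x$i * x$i)"
    by (simp add: power2_norm_eq_inner inner_vec_def)
  then show ?thesis unfolding h_pow_def by simp
qed

lemma PolyD_coord: "PolyD 1 (\<lambda>x::real^'d::finite. complex_of_real (x$i))"
  using PolyD.pvar[OF PolyD.pconst[of 0 1], of i] by simp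

lemma PolyD_h2: "PolyD 2 (h_pow 2 :: real^'d::finite \<Rightarrow> complex)"
proof -
  have "PolyD 2 (\<lambda>x::real^'d. \<Sum>i\<in>UNIV. complex_of_real (x$i) * complex_of_real (x$i))"
    using PolyD_mult[OF PolyD_coord PolyD_coord] by (intro PolyD_sum) (auto simp: numeral_2_eq_2)
  moreover have "h_pow 2 = (\<lambda>x::real^'d. \<Sum>i\<in>UNIV. complex_of_real (x$i) * complex_of_real (x$i))"
    using h2_sum by auto
  ultimately show ?thesis by simp
qed

lemma h_pow_mult: "h_pow a x * h_pow b x = h_pow (a + b) x"
  unfolding h_pow_def by (simp add: power_add)

lemma PolyD_hpow: "PolyD (2*m) (h_pow (2*m) :: real^'d::finite \<Rightarrow> complex)"
proof (induction m)
  case 0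
  have "h_pow 0 = (\<lambda>x::real^'d. 1)" by (auto simp: h_pow_def)
  then show ?case using PolyD.pconst by (metis mult_0_right)
next
  case (Suc m)
  have "h_pow (2 * Suc m) = (\<lambda>x::real^'d. h_pow (2*m) x * h_pow 2 x)"
    by (auto simp: h_pow_mult)
  then show ?case using PolyD_mult[OF Suc PolyD_h2] by simp
qed

section \<open>Operator calculus\<close>

lemma sum_list_neg: "(\<Sum>t\<leftarrow>xs. - F t) = - (\<Sum>t\<leftarrow>xs. F t :: complex)"
  by (induction xs) auto

fun comm :: "(real^'d::finite \<Rightarrow> complex) \<Rightarrow> 'd list \<Rightarrow> ('d list \<times> (real^'d \<Rightarrow> complex)) list" where
  "comm q [] = [([], q)]"
| "comm q (i # ys) = map (\<lambda>t. (i # fst t, snd t)) (comm q ys) @ map (\<lambda>t. (fst t, \<lambda>x. - snd t x)) (comm (pd i q) ys)"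

lemma smooth_neg: "smooth_fun f \<Longrightarrow> smooth_fun (\<lambda>x. - f x)"
  using smooth_cmult[of f "-1"] by simp

lemma comm_smooth: "smooth_fun q \<Longrightarrow> t \<in> set (comm q ys) \<Longrightarrow> smooth_fun (snd t)"
proof (induction ys arbitrary: q t)
  case (Cons i ys)
  then show ?case using Cons.IH[OF Cons.prems(1)] Cons.IH[OF smooth_pd[OF Cons.prems(1)]] Cons.prems(2)
    by (auto intro!: smooth_neg)
qed simp

lemma comm_len: "t \<in> set (comm q ys) \<Longrightarrow> length (fst t) \<le> length ys \<and> (length (fst t) = length ys \<longrightarrow> t = (ys, q))"
proof (induction ys arbitrary: q t)
  case Nil
  then show ?case by simp
next
  case (Cons i ys)
  then show ?case by (auto; fastforce)
qed

lemma comm_poly: "PolyD a q \<Longrightarrow> t \<in> set (comm q ys) \<Longrightarrow>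
  \<exists>m. length ys = length (fst t) + m \<and> PolyD (a - m) (snd t) \<and> (a < m \<longrightarrow> snd t = (\<lambda>x. 0))"
proof (induction ys arbitrary: q t a)
  case Nil
  then show ?case by auto
next
  case (Cons i ys)
  from Cons.prems(2) consider (A) u where "u \<in> set (comm q ys)" "t = (i # fst u, snd u)"
    | (B) u where "u \<in> set (comm (pd i q) ys)" "t = (fst u, \<lambda>x. - snd u x)" by auto
  then show ?case
  proof cases
    case A
    then show ?thesis using Cons.IH[OF Cons.prems(1) A(1)] by auto
  next
    case B
    have pq: "PolyD (a - 1) (pd i q)" using PolyD_pd[OF Cons.prems(1)] by blast
    obtain m where m: "length ys = length (fst u) + m" "PolyD (a - 1 - m) (snd u)" "a - 1 < m \<longrightarrow> snd u = (\<lambda>x. 0)"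
      using Cons.IH[OF pq B(1)] by blast
    have "PolyD (a - Suc m) (\<lambda>x. - snd u x)"
      using PolyD_cmult[OF m(2), of "-1"] by simp
    moreover have "snd u = (\<lambda>x. 0)" if "a < Suc m"
    proof (cases "a = 0")
      case True
      then have pd0: "pd i q = (\<lambda>x. 0)" using PolyD_pd[OF Cons.prems(1)] by blast
      show ?thesis
      proof (cases "m = 0")
        case True
        then have "u = (ys, pd i q)" using comm_len[OF B(1)] m(1) by auto
        then show ?thesis using pd0 by simp
      next
        case False
        then show ?thesis using m(3) \<open>a = 0\<close> by simp
      qed
    next
      case False
      then show ?thesis using m(3) that by simp
    qed
    ultimately show ?thesis using B m(1) by (intro exI[of _ "Suc m"]) auto
  qed
qed

lemma comm_eq:
  assumes "smooth_fun q" "smooth_fun g"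
  shows "q x * pdl ys g x = (\<Sum>t\<leftarrow>comm q ys. pdl (fst t) (\<lambda>y. snd t y * g y) x)"
  using assms(1)
proof (induction ys arbitrary: q x)
  case Nil
  then show ?case by simp
next
  case (Cons i ys)
  have sg: "smooth_fun (pdl ys g)" using smooth_pdl[OF assms(2)] .
  have "q x * pdl (i # ys) g x = pd i (\<lambda>y. q y * pdl ys g y) x - pd i q x * pdl ys g x"
    using pd_mult[OF smooth_diff[OF Cons.prems] smooth_diff[OF sg], of i x] by simp
  also have "(\<lambda>y. q y * pdl ys g y) = (\<lambda>y. \<Sum>t\<leftarrow>comm q ys. pdl (fst t) (\<lambda>y. snd t y * g y) y)"
    using Cons.IH[OF Cons.prems] by auto
  also have "pd i (\<lambda>y. \<Sum>t\<leftarrow>comm q ys. pdl (fst t) (\<lambda>y. snd t y * g y) y) x =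
      (\<Sum>t\<leftarrow>comm q ys. pd i (pdl (fst t) (\<lambda>y. snd t y * g y)) x)"
    by (rule pd_sum_list, rule smooth_diff, rule smooth_pdl, rule smooth_mult, erule comm_smooth[OF Cons.prems], rule assms(2))
  also have "pd i q x * pdl ys g x = (\<Sum>t\<leftarrow>comm (pd i q) ys. pdl (fst t) (\<lambda>y. snd t y * g y) x)"
    using Cons.IH[OF smooth_pd[OF Cons.prems]] by blast
  also have "\<dots> = - (\<Sum>t\<leftarrow>comm (pd i q) ys. pdl (fst t) (\<lambda>y. - snd t y * g y) x)"
  proof -
    have "pdl (fst t) (\<lambda>y. - snd t y * g y) x = - pdl (fst t) (\<lambda>y. snd t y * g y) x"
      if "t \<in> set (comm (pd i q) ys)" for t
    proof -
      have sm: "smooth_fun (\<lambda>y. snd t y * g y)"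
        using that Cons.prems assms(2) comm_smooth smooth_mult smooth_pd by blast
      have "(\<lambda>y. - snd t y * g y) = (\<lambda>y. (-1) * (snd t y * g y))" by auto
      then show ?thesis using pdl_cmult_s[OF sm, of "fst t" "-1"] by simp
    qed
    then have "(\<Sum>t\<leftarrow>comm (pd i q) ys. pdl (fst t) (\<lambda>y. - snd t y * g y) x) =
        (\<Sum>t\<leftarrow>comm (pd i q) ys. - pdl (fst t) (\<lambda>y. snd t y * g y) x)"
      by (intro arg_cong[where f=sum_list] map_cong) auto
    then show ?thesis by (simp add: sum_list_neg)
  qed
  finally show ?case by (simp add: comp_def)
qed

definition Dop :: "('d::finite list \<times> (real^'d \<Rightarrow> complex)) list \<Rightarrow> (real^'d \<Rightarrow> complex) \<Rightarrow> real^'d \<Rightarrow> complex" where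
  "Dop ops f = (\<lambda>x. \<Sum>t\<leftarrow>ops. pdl (fst t) (\<lambda>y. snd t y * f y) x)"

definition cs :: "('d::finite list \<times> (real^'d \<Rightarrow> complex)) list \<Rightarrow> bool" where
  "cs ops \<longleftrightarrow> (\<forall>t\<in>set ops. smooth_fun (snd t))"

definition pdop :: "'d::finite \<Rightarrow> ('d list \<times> (real^'d \<Rightarrow> complex)) list \<Rightarrow> ('d list \<times> (real^'d \<Rightarrow> complex)) list" where
  "pdop i ops = map (\<lambda>t. (i # fst t, snd t)) ops"

definition negop :: "('d::finite list \<times> (real^'d \<Rightarrow> complex)) list \<Rightarrow> ('d list \<times> (real^'d \<Rightarrow> complex)) list" where
  "negop ops = map (\<lambda>t. (fst t, \<lambda>x. - snd t x)) ops"

definition mulop :: "(real^'d::finite \<Rightarrow> complex) \<Rightarrow> ('d list \<times> (real^'d \<Rightarrow> complex)) list \<Rightarrow> ('d list \<times> (real^'d \<Rightarrow> complex)) list" where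
  "mulop q ops = concat (map (\<lambda>t. map (\<lambda>u. (fst u, \<lambda>x. snd u x * snd t x)) (comm q (fst t))) ops)"

definition ulist :: "'d::finite list" where
  "ulist = (SOME xs. distinct xs \<and> set xs = UNIV)"

lemma ulist: "distinct (ulist :: 'd::finite list) \<and> set (ulist :: 'd list) = UNIV"
proof -
  have "finite (UNIV :: 'd set)" by simp
  then have "\<exists>xs::'d list. distinct xs \<and> set xs = UNIV" using finite_distinct_list by blast
  then show ?thesis unfolding ulist_def by (rule someI_ex)
qed

definition lapop :: "('d::finite list \<times> (real^'d \<Rightarrow> complex)) list \<Rightarrow> ('d list \<times> (real^'d \<Rightarrow> complex)) list" where
  "lapop ops = concat (map (\<lambda>i. pdop i (pdop i ops)) ulist)"

definition Lop :: "('d::finite list \<times> (real^'d \<Rightarrow> complex)) list \<Rightarrow> ('d list \<times> (real^'d \<Rightarrow> complex)) list" where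
  "Lop ops = mulop (h_pow 2) (lapop (mulop (h_pow 2) ops))"

definition stepop :: "('d::finite list \<times> (real^'d \<Rightarrow> complex)) list \<Rightarrow> ('d list \<times> (real^'d \<Rightarrow> complex)) list" where
  "stepop ops = ops @ negop (Lop ops)"

definition opsN :: "nat \<Rightarrow> ('d::finite list \<times> (real^'d \<Rightarrow> complex)) list" where
  "opsN k = (stepop ^^ k) [([], \<lambda>x. 1)]"

definition Lq :: "(real^'d::finite \<Rightarrow> complex) \<Rightarrow> real^'d \<Rightarrow> complex" where
  "Lq g x = h_pow 2 x * (\<Sum>i\<in>UNIV. pd i (pd i (\<lambda>y. h_pow 2 y * g y)) x)"

lemma Dop_smooth: "cs ops \<Longrightarrow> smooth_fun f \<Longrightarrow> smooth_fun (Dop ops f)"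
  unfolding Dop_def cs_def by (auto intro!: smooth_sum_list smooth_pdl smooth_mult)

lemma Dop_append: "Dop (a @ b) f x = Dop a f x + Dop b f x"
  unfolding Dop_def by simp

lemma Dop_Cons: "Dop (t # b) f x = pdl (fst t) (\<lambda>y. snd t y * f y) x + Dop b f x"
  unfolding Dop_def by simp

lemma cs_append: "cs (a @ b) \<longleftrightarrow> cs a \<and> cs b"
  unfolding cs_def by auto

lemma cs_pdop: "cs (pdop i ops) = cs ops"
  unfolding cs_def pdop_def by auto

lemma cs_negop: "cs ops \<Longrightarrow> cs (negop ops)"
  unfolding cs_def negop_def by (auto intro: smooth_neg)

lemma cs_mulop: "cs ops \<Longrightarrow> smooth_fun q \<Longrightarrow> cs (mulop q ops)"
  unfolding cs_def mulop_def by (auto intro!: smooth_mult dest: comm_smooth)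

lemma cs_lapop: "cs ops \<Longrightarrow> cs (lapop ops)"
  unfolding lapop_def cs_def pdop_def by auto

lemma smooth_h2: "smooth_fun (h_pow 2 :: real^'d::finite \<Rightarrow> complex)"
  using PolyD_smooth[OF PolyD_h2] .

lemma cs_Lop: "cs ops \<Longrightarrow> cs (Lop ops)"
  unfolding Lop_def by (intro cs_mulop cs_lapop smooth_h2)

lemma cs_stepop: "cs ops \<Longrightarrow> cs (stepop ops)"
  unfolding stepop_def by (simp add: cs_append cs_negop cs_Lop)

lemma Dop_pdop:
  assumes "cs ops" "smooth_fun f"
  shows "Dop (pdop i ops) f x = pd i (Dop ops f) x"
proof -
  have "pd i (Dop ops f) x = (\<Sum>t\<leftarrow>ops. pd i (pdl (fst t) (\<lambda>y. snd t y * f y)) x)"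
    unfolding Dop_def using assms unfolding cs_def
    by (intro pd_sum_list smooth_diff smooth_pdl smooth_mult) auto
  then show ?thesis unfolding Dop_def pdop_def by (simp add: comp_def)
qed

lemma Dop_negop:
  assumes "cs ops" "smooth_fun f"
  shows "Dop (negop ops) f x = - Dop ops f x"
proof -
  have "pdl (fst t) (\<lambda>y. - snd t y * f y) x = - pdl (fst t) (\<lambda>y. snd t y * f y) x"
    if "t \<in> set ops" for t
  proof -
    have sm: "smooth_fun (\<lambda>y. snd t y * f y)"
      using that assms smooth_mult unfolding cs_def by blast
    have "(\<lambda>y. - snd t y * f y) = (\<lambda>y. (-1) * (snd t y * f y))" by auto
    then show ?thesis using pdl_cmult_s[OF sm, of "fst t" "-1"] by simp
  qed
  then have "Dop (negop ops) f x = (\<Sum>t\<leftarrow>ops. - pdl (fst t) (\<lambda>y. snd t y * f y) x)"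
    unfolding Dop_def negop_def by (simp add: comp_def) (intro arg_cong[where f=sum_list] map_cong, auto)
  then show ?thesis unfolding Dop_def by (simp add: sum_list_neg)
qed

lemma Dop_mulop:
  assumes "cs ops" "smooth_fun q" "smooth_fun f"
  shows "Dop (mulop q ops) f x = q x * Dop ops f x"
  using assms(1)
proof (induction ops)
  case Nil
  then show ?case by (simp add: Dop_def mulop_def)
next
  case (Cons t ops)
  have st: "smooth_fun (snd t)" and cso: "cs ops" using Cons.prems by (auto simp: cs_def)
  have "mulop q (t # ops) = map (\<lambda>u. (fst u, \<lambda>x. snd u x * snd t x)) (comm q (fst t)) @ mulop q ops"
    by (simp add: mulop_def)
  then have "Dop (mulop q (t # ops)) f x = Dop (map (\<lambda>u. (fst u, \<lambda>x. snd u x * snd t x)) (comm q (fst t))) f x + q x * Dop ops f x"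
    using Cons.IH[OF cso] by (simp add: Dop_append)
  also have "Dop (map (\<lambda>u. (fst u, \<lambda>x. snd u x * snd t x)) (comm q (fst t))) f x =
       q x * pdl (fst t) (\<lambda>y. snd t y * f y) x"
    using comm_eq[OF assms(2) smooth_mult[OF st assms(3)], of x "fst t"]
    unfolding Dop_def by (simp add: comp_def mult.assoc)
  finally show ?case by (simp add: Dop_Cons distrib_left)
qed

lemma Dop_concat: "Dop (concat (map G xs)) f x = (\<Sum>i\<leftarrow>xs. Dop (G i) f x)"
  by (induction xs) (auto simp: Dop_append, simp add: Dop_def)

lemma Dop_lapop:
  assumes "cs ops" "smooth_fun f"
  shows "Dop (lapop ops) f x = (\<Sum>i\<in>UNIV. pd i (pd i (Dop ops f)) x)"
proof -
  have "Dop (pdop i (pdop i ops)) f x = pd i (pd i (Dop ops f)) x" for i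
  proof -
    have "Dop (pdop i ops) f = pd i (Dop ops f)"
      using Dop_pdop[OF assms] by auto
    then show ?thesis using Dop_pdop[of "pdop i ops" f i x] assms by (simp add: cs_pdop)
  qed
  then have "Dop (lapop ops) f x = (\<Sum>i\<leftarrow>ulist. pd i (pd i (Dop ops f)) x)"
    unfolding lapop_def Dop_concat by simp
  also have "\<dots> = (\<Sum>i\<in>UNIV. pd i (pd i (Dop ops f)) x)"
    using ulist sum_list_distinct_conv_sum_set by metis
  finally show ?thesis .
qed

lemma Dop_Lop:
  assumes "cs ops" "smooth_fun f"
  shows "Dop (Lop ops) f x = Lq (Dop ops f) x"
proof -
  have c1: "cs (mulop (h_pow 2) ops)" using cs_mulop[OF assms(1) smooth_h2] .
  have e1: "Dop (mulop (h_pow 2) ops) f = (\<lambda>y. h_pow 2 y * Dop ops f y)"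
    using Dop_mulop[OF assms(1) smooth_h2 assms(2)] by auto
  show ?thesis unfolding Lop_def Lq_def
    using Dop_mulop[OF cs_lapop[OF c1] smooth_h2 assms(2)] Dop_lapop[OF c1 assms(2)] e1 by simp
qed

lemma Dop_stepop:
  assumes "cs ops" "smooth_fun f"
  shows "Dop (stepop ops) f x = Dop ops f x - Lq (Dop ops f) x"
  unfolding stepop_def by (simp add: Dop_append Dop_negop[OF cs_Lop[OF assms(1)] assms(2)] Dop_Lop[OF assms])

lemma cs_opsN: "cs (opsN k)"
proof (induction k)
  case 0
  then show ?case by (simp add: opsN_def cs_def smooth_const)
next
  case (Suc k)
  then show ?case by (simp add: opsN_def cs_stepop)
qed

lemma Dop_opsN0: "Dop (opsN 0) f x = f x"
  unfolding opsN_def Dop_def by simp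

lemma Dop_opsN_Suc:
  "smooth_fun f \<Longrightarrow> Dop (opsN (Suc k)) f x = Dop (opsN k) f x - Lq (Dop (opsN k) f) x"
  using Dop_stepop[OF cs_opsN] unfolding opsN_def by simp

definition PW :: "nat \<Rightarrow> ('d::finite list \<times> (real^'d \<Rightarrow> complex)) list \<Rightarrow> bool" where
  "PW W ops \<longleftrightarrow> (\<forall>t\<in>set ops. PolyD (W + length (fst t)) (snd t))"

definition LB :: "nat \<Rightarrow> nat \<Rightarrow> ('d::finite list \<times> (real^'d \<Rightarrow> complex)) list \<Rightarrow> bool" where
  "LB B e ops \<longleftrightarrow> (\<forall>t\<in>set ops. length (fst t) \<le> B \<and> (length (fst t) = B \<longrightarrow> (\<exists>c. snd t = (\<lambda>x. c * h_pow e x))))"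

lemma PW_mulop:
  assumes "PW W ops" "PolyD a q"
  shows "PW (W + a) (mulop q ops)"
  unfolding PW_def
proof
  fix v assume "v \<in> set (mulop q ops)"
  then obtain t u where t: "t \<in> set ops" and u: "u \<in> set (comm q (fst t))"
    and v: "v = (fst u, \<lambda>x. snd u x * snd t x)"
    unfolding mulop_def by auto
  have pt: "PolyD (W + length (fst t)) (snd t)" using assms(1) t unfolding PW_def by blast
  obtain m where m: "length (fst t) = length (fst u) + m" "PolyD (a - m) (snd u)" "a < m \<longrightarrow> snd u = (\<lambda>x. 0)"
    using comm_poly[OF assms(2) u] by blast
  show "PolyD (W + a + length (fst v)) (snd v)"
  proof (cases "m \<le> a")
    case True
    have "PolyD (a - m + (W + length (fst t))) (\<lambda>x. snd u x * snd t x)"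
      by (rule PolyD_mult[OF m(2) pt])
    moreover have "a - m + (W + length (fst t)) = W + a + length (fst v)" using True m(1) v by simp
    ultimately show ?thesis using v by simp
  next
    case False
    then have "snd u = (\<lambda>x. 0)" using m(3) by simp
    then show ?thesis using v by (simp add: PolyD.pconst)
  qed
qed

lemma PW_pdop: "PW (Suc W) ops \<Longrightarrow> PW W (pdop i ops)"
  unfolding PW_def pdop_def by auto

lemma PW_lapop: "PW (Suc (Suc W)) ops \<Longrightarrow> PW W (lapop ops)"
  unfolding PW_def lapop_def pdop_def by auto

lemma PW_negop: "PW W ops \<Longrightarrow> PW W (negop ops)"
  unfolding PW_def negop_def using PolyD_cmult[of _ _ "-1"] by auto

lemma PW_mono: "PW W ops \<Longrightarrow> W \<le> W' \<Longrightarrow> PW W' ops"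
  unfolding PW_def by (auto intro: PolyD.pmono)

lemma PW_Lop: "PW W ops \<Longrightarrow> PW (W + 2) (Lop ops)"
proof -
  assume "PW W ops"
  then have "PW (Suc (Suc W)) (mulop (h_pow 2) ops)" using PW_mulop[OF _ PolyD_h2] by fastforce
  then have "PW W (lapop (mulop (h_pow 2) ops))" by (rule PW_lapop)
  then show ?thesis unfolding Lop_def by (rule PW_mulop[OF _ PolyD_h2])
qed

lemma PW_stepop: "PW W ops \<Longrightarrow> PW (W + 2) (stepop ops)"
proof -
  assume a: "PW W ops"
  have "PW (W+2) (negop (Lop ops))" by (intro PW_negop PW_Lop a)
  moreover have "PW (W+2) ops" using PW_mono[OF a] by simp
  ultimately show ?thesis unfolding stepop_def PW_def by auto
qed

lemma PW_opsN: "PW (2*k) (opsN k)"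
proof (induction k)
  case 0
  then show ?case by (simp add: opsN_def PW_def PolyD.pconst)
next
  case (Suc k)
  then show ?case using PW_stepop[of "2*k" "opsN k"] by (simp add: opsN_def)
qed

lemma LB_mulop:
  assumes "LB B e ops"
  shows "LB B (e + 2) (mulop (h_pow 2) ops)"
  unfolding LB_def
proof
  fix v assume "v \<in> set (mulop (h_pow 2) ops)"
  then obtain t u where t: "t \<in> set ops" and u: "u \<in> set (comm (h_pow 2) (fst t))"
    and v: "v = (fst u, \<lambda>x. snd u x * snd t x)"
    unfolding mulop_def by auto
  have lt: "length (fst t) \<le> B" "length (fst t) = B \<longrightarrow> (\<exists>c. snd t = (\<lambda>x. c * h_pow e x))"
    using assms t unfolding LB_def by auto
  have lu: "length (fst u) \<le> length (fst t)" "length (fst u) = length (fst t) \<longrightarrow> u = (fst t, h_pow 2)"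
    using comm_len[OF u] by auto
  show "length (fst v) \<le> B \<and> (length (fst v) = B \<longrightarrow> (\<exists>c. snd v = (\<lambda>x. c * h_pow (e + 2) x)))"
  proof (intro conjI impI)
    show "length (fst v) \<le> B" using lt lu v by simp
    assume "length (fst v) = B"
    then have "length (fst u) = length (fst t)" "length (fst t) = B" using lt lu v by auto
    then obtain c where "snd t = (\<lambda>x. c * h_pow e x)" "u = (fst t, h_pow 2)" using lt lu by auto
    then have "snd v = (\<lambda>x. c * (h_pow e x * h_pow 2 x))" using v
      by (auto simp: algebra_simps)
    also have "\<dots> = (\<lambda>x. c * h_pow (e + 2) x)" by (simp only: h_pow_mult)
    finally have "snd v = (\<lambda>x. c * h_pow (e + 2) x)" .
    then show "\<exists>c. snd v = (\<lambda>x. c * h_pow (e + 2) x)" by blast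
  qed
qed

lemma LB_pdop: "LB B e ops \<Longrightarrow> LB (Suc B) e (pdop i ops)"
  unfolding LB_def pdop_def by auto

lemma LB_lapop: "LB B e ops \<Longrightarrow> LB (Suc (Suc B)) e (lapop ops)"
  unfolding LB_def lapop_def pdop_def by auto

lemma LB_negop: "LB B e ops \<Longrightarrow> LB B e (negop ops)"
proof -
  assume h: "LB B e ops"
  show ?thesis unfolding LB_def negop_def
  proof
    fix v assume "v \<in> set (map (\<lambda>t. (fst t, \<lambda>x. - snd t x)) ops)"
    then obtain t where t: "t \<in> set ops" "v = (fst t, \<lambda>x. - snd t x)" by auto
    have "length (fst t) \<le> B" using h t unfolding LB_def by auto
    moreover have "\<exists>c. snd v = (\<lambda>x. c * h_pow e x)" if "length (fst t) = B"
    proof -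
      from h t that have "\<exists>c. snd t = (\<lambda>x. c * h_pow e x)" unfolding LB_def by blast
      then obtain c where "snd t = (\<lambda>x. c * h_pow e x)" by blast
      then show ?thesis using t by (intro exI[of _ "-c"]) auto
    qed
    ultimately show "length (fst v) \<le> B \<and> (length (fst v) = B \<longrightarrow> (\<exists>c. snd v = (\<lambda>x. c * h_pow e x)))"
      using t by auto
  qed
qed

lemma LB_Lop: "LB B e ops \<Longrightarrow> LB (B + 2) (e + 4) (Lop ops)"
proof -
  assume "LB B e ops"
  then have "LB B (e + 2) (mulop (h_pow 2) ops)" by (rule LB_mulop)
  then have "LB (Suc (Suc B)) (e + 2) (lapop (mulop (h_pow 2) ops))" by (rule LB_lapop)
  then have "LB (Suc (Suc B)) (e + 2 + 2) (Lop ops)" unfolding Lop_def by (rule LB_mulop)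
  then show ?thesis by (simp add: numeral_eq_Suc)
qed

lemma LB_stepop: "LB B e ops \<Longrightarrow> LB (B + 2) (e + 4) (stepop ops)"
proof -
  assume a: "LB B e ops"
  have "LB (B + 2) (e + 4) (negop (Lop ops))" using LB_negop[OF LB_Lop[OF a]] .
  moreover have "\<forall>t\<in>set ops. length (fst t) \<le> B" using a unfolding LB_def by auto
  ultimately show ?thesis unfolding stepop_def LB_def by auto
qed

lemma LB_opsN: "LB (2*k) (4*k) (opsN k)"
proof (induction k)
  case 0
  have "(\<lambda>x::real^'a. 1::complex) = (\<lambda>x. 1 * h_pow 0 x)" by (auto simp: h_pow_def)
  then have "\<exists>c. (\<lambda>x::real^'a. 1::complex) = (\<lambda>x. c * h_pow 0 x)" by blast
  then show ?case unfolding opsN_def LB_def by simp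
next
  case (Suc k)
  then show ?case using LB_stepop[of "2*k" "4*k" "opsN k"] by (simp add: opsN_def add.commute)
qed



lemma vd_shift:
  assumes "(\<phi> has_vector_derivative D) (at s)"
  shows "((\<lambda>t. \<phi> (s + t)) has_vector_derivative D) (at 0)"
proof -
  have 1: "((\<lambda>t::real. s + t) has_derivative (\<lambda>h. h)) (at 0)" by (auto intro!: derivative_eq_intros)
  have 2: "(\<phi> has_derivative (\<lambda>h. h *\<^sub>R D)) (at (s + 0))" using assms by (simp add: has_vector_derivative_def)
  from has_derivative_compose[OF 1 2] show ?thesis by (simp add: has_vector_derivative_def)
qed

lemma pd2_line:
  fixes F :: "real^'d::finite \<Rightarrow> complex"
  assumes "0 < \<delta>" "\<And>s. \<bar>s\<bar> < \<delta> \<Longrightarrow> ((\<lambda>t. F (x + t *\<^sub>R axis i 1)) has_vector_derivative \<phi>1 s) (at s)"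
    "(\<phi>1 has_vector_derivative \<phi>2) (at 0)"
  shows "pd i (pd i F) x = \<phi>2"
proof -
  have e: "pd i F (x + s *\<^sub>R axis i 1) = \<phi>1 s" if "\<bar>s\<bar> < \<delta>" for s
  proof -
    have "(\<lambda>t. F (x + s *\<^sub>R axis i 1 + t *\<^sub>R axis i 1)) = (\<lambda>t. (\<lambda>t. F (x + t *\<^sub>R axis i 1)) (s + t))"
      by (simp add: scaleR_add_left add.assoc)
    moreover have "((\<lambda>t. (\<lambda>t. F (x + t *\<^sub>R axis i 1)) (s + t)) has_vector_derivative \<phi>1 s) (at 0)"
      by (rule vd_shift[OF assms(2)[OF that]])
    ultimately show ?thesis unfolding pd_def by (simp add: vector_derivative_at)
  qed
  have "((\<lambda>s. pd i F (x + s *\<^sub>R axis i 1)) has_vector_derivative \<phi>2) (at 0)"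
    by (rule has_vector_derivative_transform_within_open[OF assms(3), of "ball 0 \<delta>"])
      (use assms(1) e in auto)
  then show ?thesis by (simp add: pd_def vector_derivative_at)
qed

lemma chain_vd:
  fixes g :: "real^'d::finite \<Rightarrow> complex"
  assumes "g differentiable (at (c t))" "(c has_vector_derivative c') (at t)"
  shows "((\<lambda>s. g (c s)) has_vector_derivative (\<Sum>k\<in>UNIV. of_real (c' $ k) * pd k g (c t))) (at t)"
proof -
  have 1: "(c has_derivative (\<lambda>h. h *\<^sub>R c')) (at t)" using assms(2) by (simp add: has_vector_derivative_def)
  from has_derivative_compose[OF 1 frechet_expand[OF assms(1)]]
  have "((\<lambda>s. g (c s)) has_derivative (\<lambda>h. \<Sum>k\<in>UNIV. of_real ((h *\<^sub>R c') $ k) * pd k g (c t))) (at t)" .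
  moreover have "(\<lambda>h. \<Sum>k\<in>UNIV. of_real ((h *\<^sub>R c') $ k) * pd k g (c t)) = (\<lambda>h. h *\<^sub>R (\<Sum>k\<in>UNIV. of_real (c' $ k) * pd k g (c t)))"
    apply (rule ext)
    unfolding vector_scaleR_component unfolding of_real_mult scaleR_conv_of_real sum_distrib_left mult.assoc by simp
  ultimately show ?thesis by (simp add: has_vector_derivative_def)
qed

lemma pd_vanish:
  assumes "open S" "\<And>y. y \<in> S \<Longrightarrow> g y = 0" "y \<in> S"
  shows "pd i g y = 0"
  using pd_cong_open[OF assms(1,3), of g "\<lambda>_. 0" i] assms(2) pd_const by auto

lemma pdl_vanish:
  assumes "open S" "\<And>y. y \<in> S \<Longrightarrow> g y = 0" "y \<in> S"
  shows "pdl is g y = 0"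
  using assms(3)
proof (induction "is" arbitrary: y)
  case Nil
  then show ?case using assms(2) by simp
next
  case (Cons i "is")
  then show ?case using pd_vanish[OF assms(1), of "pdl is g"] by simp
qed

lemma Dop_vanish:
  assumes "open S" "\<And>y. y \<in> S \<Longrightarrow> f y = 0" "y \<in> S"
  shows "Dop ops f y = 0"
proof -
  have "\<forall>t\<in>set ops. pdl (fst t) (\<lambda>y. snd t y * f y) y = 0"
    using pdl_vanish[OF assms(1) _ assms(3)] assms(2) by auto
  then show ?thesis unfolding Dop_def by (induction ops) auto
qed

lemma test_Dop:
  assumes "test_fun f" "cs ops"
  shows "test_fun (Dop ops f)"
proof -
  define K where "K = closure {x. f x \<noteq> 0}"
  have oK: "open (- K)" unfolding K_def by (intro open_Compl closed_closure)
  have "{x. f x \<noteq> 0} \<subseteq> K" unfolding K_def by (rule closure_subset)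
  then have fK: "\<And>y. y \<in> - K \<Longrightarrow> f y = 0" by auto
  have "\<And>y. y \<in> - K \<Longrightarrow> Dop ops f y = 0" by (rule Dop_vanish[OF oK fK])
  then have "{x. Dop ops f x \<noteq> 0} \<subseteq> K" by blast
  then have sub: "closure {x. Dop ops f x \<noteq> 0} \<subseteq> K" unfolding K_def by (simp add: closure_minimal)
  have "compact K" using assms(1) unfolding test_fun_def K_def by blast
  then have "compact (K \<inter> closure {x. Dop ops f x \<noteq> 0})" by (intro compact_Int_closed) auto
  moreover have "K \<inter> closure {x. Dop ops f x \<noteq> 0} = closure {x. Dop ops f x \<noteq> 0}" using sub by blast
  moreover have "0 \<notin> K" using assms(1) unfolding test_fun_def K_def by blast
  moreover have "smooth_fun (Dop ops f)" using Dop_smooth assms unfolding test_fun_def by blast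
  ultimately show ?thesis unfolding test_fun_def using sub by auto
qed

lemma U_U:
  fixes x :: "real^'d::finite"
  assumes "x \<noteq> 0"
  shows "U_op (U_op g) x = g x"
proof -
  define y where "y = (1 / (norm x)\<^sup>2) *\<^sub>R x"
  have nx: "norm x > 0" using assms by simp
  have ny: "norm y = 1 / norm x" unfolding y_def using nx by (simp add: power2_eq_square)
  have yy: "(1 / (norm y)\<^sup>2) *\<^sub>R y = x" unfolding ny unfolding y_def using nx by (simp add: power2_eq_square)
  have "norm x powr (- real CARD('d)) * norm y powr (- real CARD('d)) = (norm x * norm y) powr (- real CARD('d))"
    using nx by (simp add: powr_mult)
  also have "\<dots> = 1" using nx ny by simp
  finally have p: "norm x powr (- real CARD('d)) * norm y powr (- real CARD('d)) = 1" .
  have "U_op (U_op g) x = complex_of_real (norm x powr (- real CARD('d))) * (complex_of_real (norm y powr (- real CARD('d))) * g x)"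
    unfolding U_op_def y_def[symmetric] using yy by simp
  also have "\<dots> = complex_of_real (norm x powr (- real CARD('d)) * norm y powr (- real CARD('d))) * g x"
    by (simp add: mult.assoc)
  finally show ?thesis using p by simp
qed

lemma test_bounded_support:
  assumes "test_fun q"
  obtains R where "R > 0" "\<And>z. norm z > R \<Longrightarrow> q z = 0"
proof -
  define S where "S = closure {x. q x \<noteq> 0}"
  have "bounded S" using assms unfolding test_fun_def S_def by (simp add: compact_imp_bounded)
  then have "\<exists>b>0. \<forall>x\<in>S. norm x \<le> b" by (simp only: bounded_pos)
  then obtain R where R0: "R > 0" and R1: "\<forall>z\<in>S. norm z \<le> R" by (elim exE conjE)
  note R = R0 bspec[OF R1]
  have H: "q z = 0" if "norm z > R" for z
  proof (rule ccontr)
    assume "q z \<noteq> 0"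
    then have "z \<in> {x. q x \<noteq> 0}" by simp
    then have "z \<in> S" unfolding S_def using closure_subset[of "{x. q x \<noteq> 0}"] by (rule subsetD[rotated])
    then show False using R(2)[of z] that by simp
  qed
  show ?thesis by (rule that[OF R(1) H])
qed

lemma U_vanish0:
  fixes q :: "real^'d::finite \<Rightarrow> complex"
  assumes "test_fun q"
  obtains r where "r > 0" "\<And>y. y \<in> ball 0 r \<Longrightarrow> U_op q y = 0"
proof -
  obtain R where R: "R > 0" "\<And>z. norm z > R \<Longrightarrow> q z = 0" using test_bounded_support[OF assms] by blast
  have Z: "U_op q y = 0" if "y \<in> ball 0 (1/R)" for y
  proof (cases "y = 0")
    case True
    then show ?thesis by (simp add: U_op_def)
  next
    case False
    then have ny: "norm y > 0" by simp
    have "norm y < 1 / R" using that by simp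
    then have "R < 1 / norm y" using ny R(1) by (simp add: field_simps)
    moreover have "norm ((1 / (norm y)\<^sup>2) *\<^sub>R y) = 1 / norm y" using ny by (simp add: power2_eq_square)
    ultimately have "q ((1 / (norm y)\<^sup>2) *\<^sub>R y) = 0" using R(2) by simp
    then show ?thesis by (simp add: U_op_def)
  qed
  have "1/R > 0" using R by simp
  then show ?thesis using Z by (rule that)
qed

lemma key0:
  fixes q :: "real^'d::finite \<Rightarrow> complex"
  assumes "test_fun q"
  shows "laplacian (U_op q) 0 = U_op (Lq q) 0"
proof -
  obtain r where r: "r > 0" "\<And>y. y \<in> ball 0 r \<Longrightarrow> U_op q y = 0" using U_vanish0[OF assms] by blast
  have "pd i (U_op q) y = 0" if "y \<in> ball 0 r" for i y
    using pd_vanish[OF open_ball r(2) that] .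
  then have "pd i (pd i (U_op q)) 0 = 0" for i
    by (rule pd_vanish[OF open_ball[of "0::real^'d" r]]) (use r(1) in auto)
  then have "laplacian (U_op q) 0 = 0" unfolding laplacian_def by simp
  moreover have "U_op (Lq q) 0 = 0" unfolding U_op_def by simp
  ultimately show ?thesis by simp
qed




lemma N_eq:
  fixes x :: "real^'d::finite"
  shows "norm (x + t *\<^sub>R axis i 1) ^ 2 = norm x ^ 2 + 2 * t * (x$i) + t^2"
proof -
  have "norm (x + t *\<^sub>R axis i 1) ^ 2 = inner (x + t *\<^sub>R axis i 1) (x + t *\<^sub>R axis i 1)"
    by (simp add: power2_norm_eq_inner)
  also have "\<dots> = inner x x + 2 * t * inner x (axis i 1) + t^2 * inner (axis i 1) (axis i (1::real))"
    by (simp add: inner_add_left inner_add_right inner_commute power2_eq_square algebra_simps)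
  also have "\<dots> = norm x ^ 2 + 2 * t * (x$i) + t^2"
    by (simp add: inner_axis inner_axis_axis power2_norm_eq_inner)
  finally show ?thesis .
qed

lemma line_nonzero:
  fixes x :: "real^'d::finite"
  assumes "\<bar>t\<bar> < norm x"
  shows "x + t *\<^sub>R axis i 1 \<noteq> 0"
proof
  assume "x + t *\<^sub>R axis i 1 = 0"
  then have "x = - (t *\<^sub>R axis i 1)" by (simp add: eq_neg_iff_add_eq_0)
  then have "norm x = \<bar>t\<bar>" by simp
  then show False using assms by simp
qed

lemma U_line:
  fixes x :: "real^'d::finite" and q :: "real^'d \<Rightarrow> complex"
  assumes "y \<noteq> 0"
  shows "U_op q y = complex_of_real ((norm y ^ 2) powr (- real CARD('d) / 2)) * q ((1 / norm y ^ 2) *\<^sub>R y)"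
proof -
  have n: "norm y > 0" using assms by simp
  have "(norm y ^ 2) powr (- real CARD('d) / 2) = norm y powr (2 * (- real CARD('d) / 2))"
  proof -
    have "norm y ^ 2 = norm y powr 2" using n by simp
    then have "(norm y ^ 2) powr (- real CARD('d) / 2) = (norm y powr 2) powr (- real CARD('d) / 2)" by (rule arg_cong)
    also have "\<dots> = norm y powr (2 * (- real CARD('d) / 2))" by (rule powr_powr)
    finally show ?thesis .
  qed
  also have "\<dots> = norm y powr (- real CARD('d))" by simp
  finally have e: "(norm y ^ 2) powr (- real CARD('d) / 2) = norm y powr (- real CARD('d))" .
  show ?thesis unfolding U_op_def e by simp
qed

lemma dN: "((\<lambda>t. r2 + 2*t*xi + t^2) has_real_derivative (2*xi + 2*t)) (at t)"
  by (auto intro!: derivative_eq_intros)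

lemma dw:
  assumes "r2 + 2*t*xi + t^2 > 0"
  shows "((\<lambda>t. (r2 + 2*t*xi + t^2) powr e) has_real_derivative (e * (r2 + 2*t*xi + t^2) powr (e - 1) * (2*xi + 2*t))) (at t)"
  using DERIV_chain2[OF has_real_derivative_powr[OF assms, of e] dN[of r2 xi t]] by simp

lemma dinv:
  assumes "r2 + 2*t*xi + t^2 > 0"
  shows "((\<lambda>t. 1 / (r2 + 2*t*xi + t^2)) has_real_derivative (- (2*xi + 2*t) / (r2 + 2*t*xi + t^2)^2)) (at t)"
  using assms by (auto intro!: derivative_eq_intros simp: power2_eq_square)

lemma dwp:
  assumes "r2 > 0"
  shows "((\<lambda>t. e * (r2 + 2*t*xi + t^2) powr (e - 1) * (2*xi + 2*t)) has_real_derivative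
      (e * ((e - 1) * r2 powr (e - 1 - 1) * (2*xi) * (2*xi) + r2 powr (e - 1) * 2))) (at 0)"
proof -
  have p: "r2 + 2*0*xi + 0^2 > 0" using assms by simp
  have "((\<lambda>t. e * ((r2 + 2*t*xi + t^2) powr (e - 1) * (2*xi + 2*t))) has_real_derivative
      e * ((e - 1) * (r2 + 2*0*xi + 0^2) powr (e - 1 - 1) * (2*xi + 2*0) * (2*xi + 2*0) + (r2 + 2*0*xi + 0^2) powr (e - 1) * 2)) (at 0)"
    by (intro DERIV_cmult DERIV_mult'[OF dw[OF p], THEN DERIV_cong]) (auto intro!: derivative_eq_intros)
  then show ?thesis by (simp add: mult.assoc)
qed

lemma dcp:
  assumes "r2 > 0"
  shows "((\<lambda>t. (1/(r2 + 2*t*xi + t^2)) * ak + (- (2*xi + 2*t) / (r2 + 2*t*xi + t^2)^2) * (xk + t*ak))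
     has_real_derivative (-4*xi*ak/r2^2 + (8*xi^2/r2^3 - 2/r2^2)*xk)) (at 0)"
  using assms
  by (auto intro!: derivative_eq_intros simp: field_simps power2_eq_square power3_eq_cube)

lemma axis_if: "(axis i 1 :: real^'d::finite) $ k = (if k = i then 1 else 0)"
  by (simp add: axis_def)

lemma pd2_U:
  fixes q :: "real^'d::finite \<Rightarrow> complex" and x :: "real^'d" and i :: 'd
  assumes sq: "smooth_fun q" and x0: "x \<noteq> 0"
  defines "r2 \<equiv> norm x ^ 2" and "dd \<equiv> real CARD('d)"
  defines "w0 \<equiv> r2 powr (- dd / 2)" and "c0 \<equiv> (1 / r2) *\<^sub>R x" and "xi \<equiv> x $ i"
  defines "cp0 \<equiv> (\<lambda>k. (if k = i then 1 else 0) / r2 - 2 * xi * x$k / r2^2)"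
  defines "cpp \<equiv> (\<lambda>k. -4 * xi * (if k = i then 1 else 0) / r2^2 + (8*xi^2/r2^3 - 2/r2^2) * x$k)"
  shows "pd i (pd i (U_op q)) x =
     of_real (w0 * (dd*(dd+2)*xi^2/r2^2 - dd/r2)) * q c0
   + 2 * of_real (- dd * xi * w0 / r2) * (\<Sum>k\<in>UNIV. of_real (cp0 k) * pd k q c0)
   + of_real w0 * (\<Sum>k\<in>UNIV. of_real (cp0 k) * (\<Sum>l\<in>UNIV. of_real (cp0 l) * pd l (pd k q) c0) + of_real (cpp k) * pd k q c0)"
proof -
  define a :: "real^'d" where "a = axis i 1"
  define N where "N t = r2 + 2*t*xi + t^2" for t :: real
  define Np where "Np t = 2*xi + 2*t" for t :: real
  define e where "e = - dd / 2"
  define w where "w t = N t powr e" for t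
  define wp where "wp t = e * N t powr (e - 1) * Np t" for t
  define c where "c t = (1 / N t) *\<^sub>R (x + t *\<^sub>R a)" for t
  define cp where "cp t = (1 / N t) *\<^sub>R a + (- Np t / (N t)^2) *\<^sub>R (x + t *\<^sub>R a)" for t
  define G where "G k = pd k q" for k
  define \<phi>1 where "\<phi>1 t = of_real (wp t) * q (c t) + of_real (w t) * (\<Sum>k\<in>UNIV. of_real (cp t $ k) * G k (c t))" for t
  have r2pos: "r2 > 0" using x0 by (simp add: r2_def)
  have Neq: "norm (x + t *\<^sub>R a) ^ 2 = N t" for t
    using N_eq[of x t i] by (simp add: N_def r2_def xi_def a_def)
  have Npos: "N t > 0" if "\<bar>t\<bar> < norm x" for t
  proof -
    have "x + t *\<^sub>R axis i 1 \<noteq> 0" by (rule line_nonzero[OF that])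
    then have "norm (x + t *\<^sub>R a) > 0" by (simp add: a_def)
    then show ?thesis using Neq[of t] by (metis zero_less_power)
  qed
  have dq: "q differentiable (at y)" for y using smooth_diff[OF sq] .
  have dG: "G k differentiable (at y)" for k y unfolding G_def using smooth_diff[OF smooth_pd[OF sq]] .
  have dc: "(c has_vector_derivative cp t) (at t)" if "N t > 0" for t
  proof -
    have 1: "((\<lambda>t. 1 / N t) has_real_derivative (- Np t / (N t)^2)) (at t)"
      using dinv[of r2 t xi] that unfolding N_def Np_def by simp
    have 2: "((\<lambda>t. x + t *\<^sub>R a) has_vector_derivative a) (at t)" by (auto intro!: derivative_eq_intros)
    from has_vector_derivative_scaleR[OF 1 2] show ?thesis unfolding c_def cp_def by simp
  qed
  have dw': "(w has_real_derivative wp t) (at t)" if "N t > 0" for t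
    using dw[of r2 t xi e] that unfolding w_def wp_def N_def Np_def by simp
  have dphi: "((\<lambda>t. U_op q (x + t *\<^sub>R axis i 1)) has_vector_derivative \<phi>1 t) (at t)" if "\<bar>t\<bar> < norm x" for t
  proof -
    have e1: "of_real (w s) * q (c s) = U_op q (x + s *\<^sub>R axis i 1)" if "s \<in> ball 0 (norm x)" for s
    proof -
      have "\<bar>s\<bar> < norm x" using that by simp
      then have "x + s *\<^sub>R axis i 1 \<noteq> 0" by (rule line_nonzero)
      from U_line[OF this, of q] show ?thesis using Neq[of s] unfolding w_def c_def e_def a_def by (simp add: dd_def)
    qed
    have "((\<lambda>s. of_real (w s) * q (c s)) has_vector_derivative
        (of_real (w t) * (\<Sum>k\<in>UNIV. of_real (cp t $ k) * pd k q (c t)) + of_real (wp t) * q (c t))) (at t)"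
      by (rule has_vector_derivative_mult[OF has_vector_derivative_of_real[OF dw'[OF Npos[OF that]]] chain_vd[OF dq dc[OF Npos[OF that]]]])
    then have "((\<lambda>s. of_real (w s) * q (c s)) has_vector_derivative \<phi>1 t) (at t)"
      by (simp add: \<phi>1_def G_def add.commute)
    then show ?thesis
      by (rule has_vector_derivative_transform_within_open[of _ _ _ "ball 0 (norm x)"]) (use e1 that in auto)
  qed
  have N0: "N 0 = r2" by (simp add: N_def)
  have c0': "c 0 = c0" by (simp add: c_def c0_def N0)
  have cp0': "cp 0 $ k = cp0 k" for k
    by (simp add: cp_def cp0_def N0 Np_def a_def axis_if)
  have dcpk: "((\<lambda>t. cp t $ k) has_real_derivative cpp k) (at 0)" for k
  proof -
    have "(\<lambda>t. cp t $ k) = (\<lambda>t. (1/(r2 + 2*t*xi + t^2)) * (a$k) + (- (2*xi + 2*t) / (r2 + 2*t*xi + t^2)^2) * (x$k + t*(a$k)))"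
      by (simp add: cp_def N_def Np_def fun_eq_iff)
    then show ?thesis using dcp[OF r2pos, of xi "a$k" "x$k"] by (simp add: cpp_def a_def axis_if)
  qed
  have dwp0: "(wp has_real_derivative (e * ((e - 1) * r2 powr (e - 1 - 1) * (2*xi) * (2*xi) + r2 powr (e - 1) * 2))) (at 0)"
    using dwp[OF r2pos, of e xi] unfolding wp_def N_def Np_def by simp
  have Npos0: "N 0 > 0" using r2pos N0 by simp
  have dS: "((\<lambda>t. \<Sum>k\<in>UNIV. of_real (cp t $ k) * G k (c t)) has_vector_derivative
      (\<Sum>k\<in>UNIV. of_real (cp 0 $ k) * (\<Sum>l\<in>UNIV. of_real (cp 0 $ l) * pd l (G k) (c 0)) + of_real (cpp k) * G k (c 0))) (at 0)"
    by (intro has_vector_derivative_sum has_vector_derivative_mult has_vector_derivative_of_real dcpk chain_vd dG dc Npos0)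
  have dphi1: "(\<phi>1 has_vector_derivative
      (of_real (wp 0) * (\<Sum>k\<in>UNIV. of_real (cp 0 $ k) * pd k q (c 0)) + of_real (e * ((e - 1) * r2 powr (e - 1 - 1) * (2*xi) * (2*xi) + r2 powr (e - 1) * 2)) * q (c 0)
       + (of_real (w 0) * (\<Sum>k\<in>UNIV. of_real (cp 0 $ k) * (\<Sum>l\<in>UNIV. of_real (cp 0 $ l) * pd l (G k) (c 0)) + of_real (cpp k) * G k (c 0))
          + of_real (wp 0) * (\<Sum>k\<in>UNIV. of_real (cp 0 $ k) * G k (c 0))))) (at 0)"
    unfolding \<phi>1_def
    by (intro has_vector_derivative_add has_vector_derivative_mult has_vector_derivative_of_real dwp0 chain_vd dq dc Npos0 dw' dS)
  have main: "pd i (pd i (U_op q)) x =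
      of_real (wp 0) * (\<Sum>k\<in>UNIV. of_real (cp 0 $ k) * pd k q (c 0)) + of_real (e * ((e - 1) * r2 powr (e - 1 - 1) * (2*xi) * (2*xi) + r2 powr (e - 1) * 2)) * q (c 0)
       + (of_real (w 0) * (\<Sum>k\<in>UNIV. of_real (cp 0 $ k) * (\<Sum>l\<in>UNIV. of_real (cp 0 $ l) * pd l (G k) (c 0)) + of_real (cpp k) * G k (c 0))
          + of_real (wp 0) * (\<Sum>k\<in>UNIV. of_real (cp 0 $ k) * G k (c 0)))"
    by (rule pd2_line[of "norm x", OF _ dphi dphi1]) (use x0 in simp)
  have pw1: "r2 powr (e - 1) = w0 / r2" using r2pos by (simp add: powr_diff w0_def e_def)
  have pw2: "r2 powr (e - 1 - 1) = w0 / r2^2"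
  proof -
    have "r2 powr (e - 1 - 1) = r2 powr (e - 1) / r2 powr 1" by (rule powr_diff)
    then show ?thesis using r2pos pw1 by (simp add: power2_eq_square)
  qed
  have w00: "w 0 = w0" by (simp add: w_def N0 w0_def e_def)
  have wp00: "wp 0 = - dd * xi * w0 / r2" unfolding wp_def N0 pw1 by (simp add: Np_def e_def)
  have wpp0: "e * ((e - 1) * r2 powr (e - 1 - 1) * (2*xi) * (2*xi) + r2 powr (e - 1) * 2) = w0 * (dd*(dd+2)*xi^2/r2^2 - dd/r2)"
    unfolding pw1 pw2 using r2pos by (simp add: e_def field_simps power2_eq_square)
  show ?thesis unfolding main wpp0 w00 wp00 c0' cp0' G_def by (simp add: algebra_simps)
qed



lemma swap_of_real:
  fixes G :: "'d::finite \<Rightarrow> complex"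
  shows "(\<Sum>i\<in>UNIV. \<Sum>k\<in>UNIV. of_real (u i k) * G k) = (\<Sum>k\<in>UNIV. of_real (\<Sum>i\<in>UNIV. u i k) * G k)"
  by (subst sum.swap) (simp add: sum_distrib_right)

lemma delta_sum: "(\<Sum>i\<in>UNIV. (if k = i then 1 else 0) * f i) = (f (k::'d::finite) :: real)"
proof -
  have "(\<Sum>i\<in>UNIV. (if k = i then 1 else 0) * f i) = (\<Sum>i\<in>UNIV. if k = i then f i else 0)"
    by (rule sum.cong) auto
  then show ?thesis by simp
qed

lemma sumT1:
  fixes x :: "real^'d::finite"
  assumes r2: "r2 = (\<Sum>i\<in>UNIV. (x$i)^2)" "r2 > 0" and dd: "dd = real CARD('d)"
  shows "(\<Sum>i\<in>UNIV. w0 * (dd*(dd+2)*(x$i)^2/r2^2 - dd/r2)) = 2*dd*w0/r2"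
proof -
  have "(\<Sum>i\<in>UNIV. w0 * (dd*(dd+2)*(x$i)^2/r2^2 - dd/r2)) = (w0*dd*(dd+2)/r2^2) * (\<Sum>i\<in>UNIV. (x$i)^2) - (\<Sum>i\<in>(UNIV::'d set). w0*dd/r2)"
    by (simp add: sum_subtractf sum_distrib_left algebra_simps sum_divide_distrib sum.distrib add_divide_distrib)
  also have "\<dots> = (w0*dd*(dd+2)/r2^2) * r2 - dd * (w0*dd/r2)" using r2 dd by simp
  also have "\<dots> = 2*dd*w0/r2" using r2(2) by (simp add: field_simps power2_eq_square)
  finally show ?thesis .
qed

lemma sumT2:
  fixes x :: "real^'d::finite"
  assumes r2: "r2 = (\<Sum>i\<in>UNIV. (x$i)^2)" "r2 > 0"
  shows "(\<Sum>i\<in>UNIV. 2 * (- dd * (x$i) * w0 / r2) * ((if k = i then 1 else 0) / r2 - 2 * (x$i) * x$k / r2^2)) = 2*dd*w0*(x$k)/r2^2"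
proof -
  have "(\<Sum>i\<in>UNIV. 2 * (- dd * (x$i) * w0 / r2) * ((if k = i then 1 else 0) / r2 - 2 * (x$i) * x$k / r2^2))
     = (\<Sum>i\<in>UNIV. (if k = i then 1 else 0) * (-2*dd*w0/r2^2 * x$i)) + (4*dd*w0*(x$k)/r2^3) * (\<Sum>i\<in>UNIV. (x$i)^2)"
  proof -
    have "(\<Sum>i\<in>UNIV. 2 * (- dd * (x$i) * w0 / r2) * ((if k = i then 1 else 0) / r2 - 2 * (x$i) * x$k / r2^2))
       = (\<Sum>i\<in>UNIV. (if k = i then 1 else 0) * (-2*dd*w0/r2^2 * x$i) + (4*dd*w0*(x$k)/r2^3) * (x$i)^2)"
      by (rule sum.cong) (use r2(2) in \<open>auto simp: field_simps power2_eq_square power3_eq_cube power4_eq_xxxx\<close>)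
    then show ?thesis by (simp only: sum.distrib sum_distrib_left)
  qed
  also have "\<dots> = -2*dd*w0/r2^2 * x$k + (4*dd*w0*(x$k)/r2^3) * r2" using r2(1) by (simp only: delta_sum)
  also have "\<dots> = 2*dd*w0*(x$k)/r2^2" using r2(2) by (simp add: field_simps power2_eq_square power3_eq_cube)
  finally show ?thesis .
qed

lemma sumT3a:
  fixes x :: "real^'d::finite"
  assumes r2: "r2 = (\<Sum>i\<in>UNIV. (x$i)^2)" "r2 > 0"
  shows "(\<Sum>i\<in>UNIV. ((if k = i then 1 else 0) / r2 - 2 * (x$i) * x$k / r2^2) * ((if l = i then 1 else 0) / r2 - 2 * (x$i) * x$l / r2^2))
     = (if k = l then 1 / r2^2 else 0)"
proof -
  have "(\<Sum>i\<in>UNIV. ((if k = i then 1 else 0) / r2 - 2 * (x$i) * x$k / r2^2) * ((if l = i then 1 else 0) / r2 - 2 * (x$i) * x$l / r2^2))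
     = (\<Sum>i\<in>UNIV. (if k = i then 1 else 0) * ((if l = i then 1 else 0)/r2^2 - 2 * x$i * x$l / r2^3)
         + (if l = i then 1 else 0) * (- 2 * x$i * x$k / r2^3) + (4 * x$k * x$l / r2^4) * (x$i)^2)"
    by (rule sum.cong) (use r2(2) in \<open>auto simp: field_simps power2_eq_square power3_eq_cube power4_eq_xxxx\<close>)
  also have "\<dots> = ((if l = k then 1 else 0)/r2^2 - 2 * x$k * x$l / r2^3) + (- 2 * x$l * x$k / r2^3) + (4 * x$k * x$l / r2^4) * r2"
    unfolding sum.distrib sum_distrib_left[symmetric] delta_sum r2(1) ..
  also have "\<dots> = (if k = l then 1 / r2^2 else 0)"
    using r2(2) by (auto simp: field_simps power2_eq_square power3_eq_cube power4_eq_xxxx)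
  finally show ?thesis .
qed

lemma sumT3b:
  fixes x :: "real^'d::finite"
  assumes r2: "r2 = (\<Sum>i\<in>UNIV. (x$i)^2)" "r2 > 0" and dd: "dd = real CARD('d)"
  shows "(\<Sum>i\<in>UNIV. -4 * (x$i) * (if k = i then 1 else 0) / r2^2 + (8*(x$i)^2/r2^3 - 2/r2^2) * x$k)
     = (4 - 2*dd) * x$k / r2^2"
proof -
  have "(\<Sum>i\<in>UNIV. -4 * (x$i) * (if k = i then 1 else 0) / r2^2 + (8*(x$i)^2/r2^3 - 2/r2^2) * x$k)
     = (\<Sum>i\<in>UNIV. (if k = i then 1 else 0) * (-4 * x$i / r2^2) + (8 * x$k / r2^3) * (x$i)^2 + (- 2 * x$k / r2^2))"
    by (rule sum.cong) (use r2(2) in \<open>auto simp: field_simps power2_eq_square power3_eq_cube power4_eq_xxxx\<close>)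
  also have "\<dots> = (-4 * x$k / r2^2) + (8 * x$k / r2^3) * r2 + (\<Sum>i\<in>(UNIV::'d set). - 2 * x$k / r2^2)"
    unfolding sum.distrib sum_distrib_left[symmetric] delta_sum r2(1) ..
  also have "\<dots> = (4 - 2*dd) * x$k / r2^2"
    using r2(2) dd by (simp add: field_simps power2_eq_square power3_eq_cube)
  finally show ?thesis .
qed

lemma sum_identity:
  fixes x :: "real^'d::finite" and q0 :: complex and G :: "'d \<Rightarrow> complex" and H :: "'d \<Rightarrow> 'd \<Rightarrow> complex"
  assumes r2: "r2 = (\<Sum>i\<in>UNIV. (x$i)^2)" "r2 > 0" and dd: "dd = real CARD('d)"
  defines "cp0 \<equiv> (\<lambda>i k. (if k = i then 1 else 0) / r2 - 2 * (x$i) * x$k / r2^2)"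
  defines "cpp \<equiv> (\<lambda>i k. -4 * (x$i) * (if k = i then 1 else 0) / r2^2 + (8*(x$i)^2/r2^3 - 2/r2^2) * x$k)"
  shows "(\<Sum>i\<in>UNIV. of_real (w0 * (dd*(dd+2)*(x$i)^2/r2^2 - dd/r2)) * q0
     + 2 * of_real (- dd * (x$i) * w0 / r2) * (\<Sum>k\<in>UNIV. of_real (cp0 i k) * G k)
     + of_real w0 * (\<Sum>k\<in>UNIV. of_real (cp0 i k) * (\<Sum>l\<in>UNIV. of_real (cp0 i l) * H k l) + of_real (cpp i k) * G k))
   = of_real w0 * (of_real (1/r2) * (\<Sum>i\<in>UNIV. 2 * q0 + 4 * of_real (x$i / r2) * G i + of_real (1/r2) * H i i))"
proof -
  have A: "(\<Sum>i\<in>UNIV. of_real (w0 * (dd*(dd+2)*(x$i)^2/r2^2 - dd/r2)) * q0) = of_real (2*dd*w0/r2) * q0"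
    unfolding sum_distrib_right[symmetric] of_real_sum[symmetric] sumT1[OF r2 dd] ..
  have B: "(\<Sum>i\<in>UNIV. 2 * of_real (- dd * (x$i) * w0 / r2) * (\<Sum>k\<in>UNIV. of_real (cp0 i k) * G k))
      = (\<Sum>k\<in>UNIV. of_real (2*dd*w0*(x$k)/r2^2) * G k)"
  proof -
    have "(\<Sum>i\<in>UNIV. 2 * of_real (- dd * (x$i) * w0 / r2) * (\<Sum>k\<in>UNIV. of_real (cp0 i k) * G k))
      = (\<Sum>i\<in>UNIV. \<Sum>k\<in>UNIV. of_real (2 * (- dd * (x$i) * w0 / r2) * cp0 i k) * G k)"
      by (simp add: sum_distrib_left mult.assoc)
    also have "\<dots> = (\<Sum>k\<in>UNIV. of_real (\<Sum>i\<in>UNIV. 2 * (- dd * (x$i) * w0 / r2) * cp0 i k) * G k)"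
      by (rule swap_of_real)
    also have "\<dots> = (\<Sum>k\<in>UNIV. of_real (2*dd*w0*(x$k)/r2^2) * G k)"
      unfolding cp0_def sumT2[OF r2] ..
    finally show ?thesis .
  qed
  have C1: "(\<Sum>i\<in>UNIV. \<Sum>k\<in>UNIV. of_real (cp0 i k) * (\<Sum>l\<in>UNIV. of_real (cp0 i l) * H k l))
      = (\<Sum>k\<in>UNIV. of_real (1/r2^2) * H k k)"
  proof -
    have "(\<Sum>i\<in>UNIV. \<Sum>k\<in>UNIV. of_real (cp0 i k) * (\<Sum>l\<in>UNIV. of_real (cp0 i l) * H k l))
        = (\<Sum>k\<in>UNIV. \<Sum>i\<in>UNIV. \<Sum>l\<in>UNIV. of_real (cp0 i k * cp0 i l) * H k l)"
      by (subst sum.swap) (simp add: sum_distrib_left mult.assoc)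
    also have "\<dots> = (\<Sum>k\<in>UNIV. \<Sum>l\<in>UNIV. of_real (\<Sum>i\<in>UNIV. cp0 i k * cp0 i l) * H k l)"
      by (rule sum.cong[OF refl], rule swap_of_real)
    also have "\<dots> = (\<Sum>k\<in>UNIV. \<Sum>l\<in>UNIV. of_real (if k = l then 1 / r2^2 else 0) * H k l)"
      unfolding cp0_def sumT3a[OF r2] ..
    also have "\<dots> = (\<Sum>k\<in>UNIV. of_real (1/r2^2) * H k k)"
    proof (rule sum.cong[OF refl])
      fix k
      have "(\<Sum>l\<in>UNIV. of_real (if k = l then 1 / r2^2 else 0) * H k l) = (\<Sum>l\<in>UNIV. if k = l then of_real (1 / r2^2) * H k l else 0)"
        by (rule sum.cong) auto
      then show "(\<Sum>l\<in>UNIV. of_real (if k = l then 1 / r2^2 else 0) * H k l) = of_real (1/r2^2) * H k k" by simp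
    qed
    finally show ?thesis .
  qed
  have C2: "(\<Sum>i\<in>UNIV. \<Sum>k\<in>UNIV. of_real (cpp i k) * G k) = (\<Sum>k\<in>UNIV. of_real ((4 - 2*dd) * x$k / r2^2) * G k)"
    unfolding swap_of_real cpp_def sumT3b[OF r2 dd] ..
  have C: "(\<Sum>i\<in>UNIV. of_real w0 * (\<Sum>k\<in>UNIV. of_real (cp0 i k) * (\<Sum>l\<in>UNIV. of_real (cp0 i l) * H k l) + of_real (cpp i k) * G k))
      = of_real w0 * ((\<Sum>k\<in>UNIV. of_real (1/r2^2) * H k k) + (\<Sum>k\<in>UNIV. of_real ((4 - 2*dd) * x$k / r2^2) * G k))"
  proof -
    have "(\<Sum>i\<in>UNIV. of_real w0 * (\<Sum>k\<in>UNIV. of_real (cp0 i k) * (\<Sum>l\<in>UNIV. of_real (cp0 i l) * H k l) + of_real (cpp i k) * G k))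
      = of_real w0 * ((\<Sum>i\<in>UNIV. \<Sum>k\<in>UNIV. of_real (cp0 i k) * (\<Sum>l\<in>UNIV. of_real (cp0 i l) * H k l)) + (\<Sum>i\<in>UNIV. \<Sum>k\<in>UNIV. of_real (cpp i k) * G k))"
      by (simp only: sum.distrib sum_distrib_left[symmetric])
    then show ?thesis unfolding C1 C2 .
  qed
  have LHS: "(\<Sum>i\<in>UNIV. of_real (w0 * (dd*(dd+2)*(x$i)^2/r2^2 - dd/r2)) * q0
     + 2 * of_real (- dd * (x$i) * w0 / r2) * (\<Sum>k\<in>UNIV. of_real (cp0 i k) * G k)
     + of_real w0 * (\<Sum>k\<in>UNIV. of_real (cp0 i k) * (\<Sum>l\<in>UNIV. of_real (cp0 i l) * H k l) + of_real (cpp i k) * G k))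
     = of_real (2*dd*w0/r2) * q0 + (\<Sum>k\<in>UNIV. of_real (4*w0*(x$k)/r2^2) * G k) + (\<Sum>k\<in>UNIV. of_real (w0/r2^2) * H k k)"
  proof -
    have "(\<Sum>k\<in>UNIV. of_real (2*dd*w0*(x$k)/r2^2) * G k) + of_real w0 * (\<Sum>k\<in>UNIV. of_real ((4 - 2*dd) * x$k / r2^2) * G k)
        = (\<Sum>k\<in>UNIV. of_real (4*w0*(x$k)/r2^2) * G k)"
      unfolding sum_distrib_left sum.distrib[symmetric]
    proof (rule sum.cong[OF refl])
      fix k
      have re: "2*dd*w0*(x$k)/r2^2 + w0 * ((4 - 2*dd) * x$k / r2^2) = 4*w0*(x$k)/r2^2"
        using r2(2) by (simp add: field_simps)
      have "complex_of_real (2*dd*w0*(x$k)/r2^2) * G k + of_real w0 * (of_real ((4 - 2*dd) * x$k / r2^2) * G k)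
          = complex_of_real (2*dd*w0*(x$k)/r2^2 + w0 * ((4 - 2*dd) * x$k / r2^2)) * G k"
        by (simp only: of_real_add of_real_mult distrib_right mult.assoc)
      then show "complex_of_real (2*dd*w0*(x$k)/r2^2) * G k + of_real w0 * (of_real ((4 - 2*dd) * x$k / r2^2) * G k)
          = complex_of_real (4*w0*(x$k)/r2^2) * G k" unfolding re .
    qed
    note f1 = this
    have f2: "of_real w0 * (\<Sum>k\<in>UNIV. of_real (1/r2^2) * H k k) = (\<Sum>k\<in>UNIV. of_real (w0/r2^2) * H k k)"
      by (simp add: sum_distrib_left mult.assoc)
    let ?a = "\<lambda>i. of_real (w0 * (dd*(dd+2)*(x$i)^2/r2^2 - dd/r2)) * q0"
    let ?b = "\<lambda>i. 2 * of_real (- dd * (x$i) * w0 / r2) * (\<Sum>k\<in>UNIV. of_real (cp0 i k) * G k)"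
    let ?c = "\<lambda>i. of_real w0 * (\<Sum>k\<in>UNIV. of_real (cp0 i k) * (\<Sum>l\<in>UNIV. of_real (cp0 i l) * H k l) + of_real (cpp i k) * G k)"
    have "(\<Sum>i\<in>UNIV. ?a i + ?b i + ?c i) = (\<Sum>i\<in>UNIV. ?a i) + (\<Sum>i\<in>UNIV. ?b i) + (\<Sum>i\<in>UNIV. ?c i)"
      by (simp only: sum.distrib)
    also have "\<dots> = of_real (2*dd*w0/r2) * q0 + (\<Sum>k\<in>UNIV. of_real (2*dd*w0*(x$k)/r2^2) * G k)
        + of_real w0 * ((\<Sum>k\<in>UNIV. of_real (1/r2^2) * H k k) + (\<Sum>k\<in>UNIV. of_real ((4 - 2*dd) * x$k / r2^2) * G k))"
      unfolding A B C ..
    also have "\<dots> = of_real (2*dd*w0/r2) * q0 + ((\<Sum>k\<in>UNIV. of_real (2*dd*w0*(x$k)/r2^2) * G k)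
        + of_real w0 * (\<Sum>k\<in>UNIV. of_real ((4 - 2*dd) * x$k / r2^2) * G k)) + of_real w0 * (\<Sum>k\<in>UNIV. of_real (1/r2^2) * H k k)"
      by (simp only: distrib_left add.assoc add.commute add.left_commute)
    also have "\<dots> = of_real (2*dd*w0/r2) * q0 + (\<Sum>k\<in>UNIV. of_real (4*w0*(x$k)/r2^2) * G k) + (\<Sum>k\<in>UNIV. of_real (w0/r2^2) * H k k)"
      unfolding f1 f2 ..
    finally show ?thesis .
  qed
  have RHS: "of_real w0 * (of_real (1/r2) * (\<Sum>i\<in>UNIV. 2 * q0 + 4 * of_real (x$i / r2) * G i + of_real (1/r2) * H i i))
     = of_real (2*dd*w0/r2) * q0 + (\<Sum>k\<in>UNIV. of_real (4*w0*(x$k)/r2^2) * G k) + (\<Sum>k\<in>UNIV. of_real (w0/r2^2) * H k k)"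
  proof -
    have "(\<Sum>i\<in>UNIV. 2 * q0 + 4 * of_real (x$i / r2) * G i + of_real (1/r2) * H i i)
        = of_real (2 * dd) * q0 + (\<Sum>k\<in>UNIV. 4 * of_real (x$k / r2) * G k) + (\<Sum>k\<in>UNIV. of_real (1/r2) * H k k)"
      unfolding sum.distrib using dd by simp
    then show ?thesis
      by (simp add: distrib_left sum_distrib_left power2_eq_square mult_ac)
  qed
  show ?thesis unfolding LHS RHS ..
qed


lemma pd_h2: "pd i (h_pow 2) (y::real^'d::finite) = 2 * of_real (y$i)"
proof -
  have hd: "((\<lambda>x::real^'d. \<Sum>j\<in>UNIV. complex_of_real (x$j) * complex_of_real (x$j)) has_derivative
      (\<lambda>h. \<Sum>j\<in>UNIV. complex_of_real (y$j) * complex_of_real (h$j) + complex_of_real (h$j) * complex_of_real (y$j))) (at y)"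
    by (intro has_derivative_sum has_derivative_mult coord_hasder)
  have "h_pow 2 = (\<lambda>x::real^'d. \<Sum>j\<in>UNIV. complex_of_real (x$j) * complex_of_real (x$j))"
    using h2_sum by auto
  then have "pd i (h_pow 2) y = (\<Sum>j\<in>UNIV. complex_of_real (y$j) * complex_of_real ((axis i 1::real^'d)$j) + complex_of_real ((axis i 1::real^'d)$j) * complex_of_real (y$j))"
    using pd_has_derivative[OF hd, of i] by simp
  also have "\<dots> = (\<Sum>j\<in>UNIV. if j = i then 2 * of_real (y$i) else 0)"
    by (rule sum.cong) (auto simp: axis_def)
  finally show ?thesis by simp
qed

lemma lap_h2q:
  fixes q :: "real^'d::finite \<Rightarrow> complex"
  assumes sq: "smooth_fun q"
  shows "pd i (pd i (\<lambda>y. h_pow 2 y * q y)) z = 2 * q z + 4 * of_real (z$i) * pd i q z + h_pow 2 z * pd i (pd i q) z"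
proof -
  have sh: "smooth_fun (h_pow 2 :: real^'d \<Rightarrow> complex)" by (rule smooth_h2)
  have sc: "smooth_fun (\<lambda>y::real^'d. 2 * complex_of_real (y$i))" by (intro smooth_cmult smooth_coord)
  have sG: "smooth_fun (pd i q)" by (rule smooth_pd[OF sq])
  have "pd i (\<lambda>y. h_pow 2 y * q y) y = 2 * of_real (y$i) * q y + h_pow 2 y * pd i q y" for y
    using pd_mult[OF smooth_diff[OF sh] smooth_diff[OF sq], of i y] by (simp add: pd_h2)
  then have d1: "pd i (\<lambda>y. h_pow 2 y * q y) = (\<lambda>y. 2 * of_real (y$i) * q y + h_pow 2 y * pd i q y)" by auto
  have pc: "pd i (\<lambda>y::real^'d. 2 * complex_of_real (y$i)) z = 2"
  proof -
    have "(\<lambda>y::real^'d. complex_of_real (y$i)) differentiable (at z)" by (rule smooth_diff[OF smooth_coord])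
    from pd_cmult[OF this, where c=2 and i=i] show ?thesis by (simp add: pd_coord)
  qed
  have "pd i (\<lambda>y. 2 * of_real (y$i) * q y + h_pow 2 y * pd i q y) z
      = pd i (\<lambda>y. 2 * of_real (y$i) * q y) z + pd i (\<lambda>y. h_pow 2 y * pd i q y) z"
    by (intro pd_add smooth_diff smooth_mult sc sq sh sG)
  also have "pd i (\<lambda>y. 2 * of_real (y$i) * q y) z = 2 * q z + 2 * of_real (z$i) * pd i q z"
    using pd_mult[OF smooth_diff[OF sc] smooth_diff[OF sq], of i z] pc by simp
  also have "pd i (\<lambda>y. h_pow 2 y * pd i q y) z = 2 * of_real (z$i) * pd i q z + h_pow 2 z * pd i (pd i q) z"
    using pd_mult[OF smooth_diff[OF sh] smooth_diff[OF sG], of i z] by (simp add: pd_h2)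
  finally show ?thesis unfolding d1 by simp
qed

lemma keyNZ:
  fixes q :: "real^'d::finite \<Rightarrow> complex"
  assumes tq: "test_fun q" and x0: "x \<noteq> 0"
  shows "laplacian (U_op q) x = U_op (Lq q) x"
proof -
  have sq: "smooth_fun q" using tq unfolding test_fun_def by blast
  define r2 where "r2 = norm x ^ 2"
  define dd where "dd = real CARD('d)"
  define w0 where "w0 = r2 powr (- dd / 2)"
  define c0 where "c0 = (1 / r2) *\<^sub>R x"
  have "norm x ^ 2 = (\<Sum>i\<in>UNIV. x$i * x$i)" by (simp add: power2_norm_eq_inner inner_vec_def)
  then have r2s: "r2 = (\<Sum>i\<in>UNIV. (x$i)^2)" unfolding r2_def by (simp add: power2_eq_square)
  have r2pos: "r2 > 0" using x0 by (simp add: r2_def)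
  have "laplacian (U_op q) x = (\<Sum>i\<in>UNIV. pd i (pd i (U_op q)) x)" by (simp add: laplacian_def)
  also have "\<dots> = (\<Sum>i\<in>UNIV. of_real (w0 * (dd*(dd+2)*(x$i)^2/r2^2 - dd/r2)) * q c0
     + 2 * of_real (- dd * (x$i) * w0 / r2) * (\<Sum>k\<in>UNIV. of_real ((if k = i then 1 else 0) / r2 - 2 * (x$i) * x$k / r2^2) * pd k q c0)
     + of_real w0 * (\<Sum>k\<in>UNIV. of_real ((if k = i then 1 else 0) / r2 - 2 * (x$i) * x$k / r2^2) * (\<Sum>l\<in>UNIV. of_real ((if l = i then 1 else 0) / r2 - 2 * (x$i) * x$l / r2^2) * pd l (pd k q) c0)
        + of_real (-4 * (x$i) * (if k = i then 1 else 0) / r2^2 + (8*(x$i)^2/r2^3 - 2/r2^2) * x$k) * pd k q c0))"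
    by (rule sum.cong[OF refl]) (simp add: pd2_U[OF sq x0] r2_def dd_def w0_def c0_def)
  also have "\<dots> = of_real w0 * (of_real (1/r2) * (\<Sum>i\<in>UNIV. 2 * q c0 + 4 * of_real (x$i / r2) * pd i q c0 + of_real (1/r2) * pd i (pd i q) c0))"
    by (rule sum_identity[OF r2s r2pos dd_def])
  also have "\<dots> = U_op (Lq q) x"
  proof -
    have nc0: "norm c0 ^ 2 = 1 / r2" unfolding c0_def r2_def using x0 by (simp add: power2_eq_square)
    have h2c0: "h_pow 2 c0 = of_real (1/r2)" unfolding h_pow_def nc0 ..
    have "Lq q c0 = of_real (1/r2) * (\<Sum>i\<in>UNIV. 2 * q c0 + 4 * of_real (x$i / r2) * pd i q c0 + of_real (1/r2) * pd i (pd i q) c0)"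
      unfolding Lq_def lap_h2q[OF sq] h2c0 by (simp add: c0_def)
    moreover have "U_op (Lq q) x = of_real w0 * Lq q c0"
      using U_line[OF x0, of "Lq q"] by (simp add: w0_def r2_def dd_def c0_def)
    ultimately show ?thesis by simp
  qed
  finally show ?thesis .
qed



lemma key:
  fixes q :: "real^'d::finite \<Rightarrow> complex"
  assumes "test_fun q"
  shows "laplacian (U_op q) = U_op (Lq q)"
proof
  fix x :: "real^'d"
  show "laplacian (U_op q) x = U_op (Lq q) x"
    using key0[OF assms] keyNZ[OF assms] by (cases "x = 0") auto
qed

lemma iter:
  fixes f :: "real^'d::finite \<Rightarrow> complex"
  assumes "test_fun f"
  shows "one_minus_lap_pow k (U_op f) = U_op (Dop (opsN k) f)"
proof (induction k)
  case 0
  have "Dop (opsN 0) f = f" using Dop_opsN0 by auto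
  then show ?case by (simp add: one_minus_lap_pow_def)
next
  case (Suc k)
  have sf: "smooth_fun f" using assms unfolding test_fun_def by blast
  have tq: "test_fun (Dop (opsN k) f)" using test_Dop[OF assms cs_opsN] .
  have "one_minus_lap_pow (Suc k) (U_op f) = (\<lambda>x. one_minus_lap_pow k (U_op f) x - laplacian (one_minus_lap_pow k (U_op f)) x)"
    by (simp add: one_minus_lap_pow_def)
  also have "\<dots> = (\<lambda>x. U_op (Dop (opsN k) f) x - U_op (Lq (Dop (opsN k) f)) x)"
    using Suc key[OF tq] by simp
  also have "\<dots> = U_op (Dop (opsN (Suc k)) f)"
    by (rule ext) (simp add: U_op_def Dop_opsN_Suc[OF sf] algebra_simps)
  finally show ?case .
qed

lemma sum_filter_group:
  fixes G :: "'a \<Rightarrow> complex"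
  assumes "finite S" "\<forall>t\<in>set xs. k t \<in> S"
  shows "(\<Sum>\<gamma>\<in>S. \<Sum>t\<leftarrow>filter (\<lambda>t. k t = \<gamma>) xs. G t) = (\<Sum>t\<leftarrow>xs. G t)"
  using assms(2)
proof (induction xs)
  case Nil
  then show ?case by simp
next
  case (Cons a xs)
  have "(\<Sum>\<gamma>\<in>S. \<Sum>t\<leftarrow>filter (\<lambda>t. k t = \<gamma>) (a # xs). G t)
      = (\<Sum>\<gamma>\<in>S. (if k a = \<gamma> then G a else 0) + (\<Sum>t\<leftarrow>filter (\<lambda>t. k t = \<gamma>) xs. G t))"
    by (rule sum.cong) auto
  also have "\<dots> = (\<Sum>\<gamma>\<in>S. (if k a = \<gamma> then G a else 0)) + (\<Sum>\<gamma>\<in>S. \<Sum>t\<leftarrow>filter (\<lambda>t. k t = \<gamma>) xs. G t)"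
    by (rule sum.distrib)
  also have "(\<Sum>\<gamma>\<in>S. (if k a = \<gamma> then G a else 0)) = G a"
    using Cons.prems assms(1) by (simp add: sum.delta)
  finally show ?case using Cons by simp
qed

lemma finite_mi: "finite {\<gamma>::'d::finite \<Rightarrow> nat. mi_norm \<gamma> \<le> N}"
proof (rule finite_subset)
  show "{\<gamma>::'d \<Rightarrow> nat. mi_norm \<gamma> \<le> N} \<subseteq> PiE UNIV (\<lambda>_. {..N})"
  proof
    fix \<gamma> :: "'d \<Rightarrow> nat" assume "\<gamma> \<in> {\<gamma>. mi_norm \<gamma> \<le> N}"
    then have "\<gamma> i \<le> N" for i
      unfolding mi_norm_def using member_le_sum[of i UNIV \<gamma>] by simp
    then show "\<gamma> \<in> PiE UNIV (\<lambda>_. {..N})" by (simp add: PiE_iff)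
  qed
  show "finite (PiE (UNIV::'d set) (\<lambda>_. {..N}))" by (rule finite_PiE) auto
qed

definition pcoef :: "('d::finite list \<times> (real^'d \<Rightarrow> complex)) list \<Rightarrow> ('d \<Rightarrow> nat) \<Rightarrow> real^'d \<Rightarrow> complex" where
  "pcoef ops \<gamma> = (\<lambda>x. \<Sum>t\<leftarrow>filter (\<lambda>t. count_list (fst t) = \<gamma>) ops. snd t x)"

lemma sum_list_times:
  "(\<Sum>t\<leftarrow>xs. F t) * (c::complex) = (\<Sum>t\<leftarrow>xs. F t * c)"
  by (induction xs) (auto simp: distrib_right)

lemma regroup:
  fixes f :: "real^'d::finite \<Rightarrow> complex"
  assumes "cs ops" "smooth_fun f" "\<forall>t\<in>set ops. length (fst t) \<le> N"
  shows "Dop ops f x = (\<Sum>\<gamma>\<in>{\<gamma>. mi_norm \<gamma> \<le> N}. partial \<gamma> (\<lambda>y. pcoef ops \<gamma> y * f y) x)"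
proof -
  have "partial \<gamma> (\<lambda>y. pcoef ops \<gamma> y * f y) x =
     (\<Sum>t\<leftarrow>filter (\<lambda>t. count_list (fst t) = \<gamma>) ops. pdl (fst t) (\<lambda>y. snd t y * f y) x)" for \<gamma>
  proof -
    let ?F = "filter (\<lambda>t. count_list (fst t) = \<gamma>) ops"
    have sm: "\<And>t. t \<in> set ?F \<Longrightarrow> smooth_fun (\<lambda>y. snd t y * f y)"
      using assms(1,2) unfolding cs_def by (auto intro: smooth_mult)
    have "(\<lambda>y. pcoef ops \<gamma> y * f y) = (\<lambda>y. \<Sum>t\<leftarrow>?F. snd t y * f y)"
      unfolding pcoef_def by (simp add: sum_list_times)
    then have "partial \<gamma> (\<lambda>y. pcoef ops \<gamma> y * f y) x = (\<Sum>t\<leftarrow>?F. pdl (SOME xs. \<forall>i. count_list xs i = \<gamma> i) (\<lambda>y. snd t y * f y) x)"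
    proof -
      have "pdl (SOME xs. \<forall>i. count_list xs i = \<gamma> i) (\<lambda>y. \<Sum>t\<leftarrow>?F. snd t y * f y) =
          (\<lambda>y. \<Sum>t\<leftarrow>?F. pdl (SOME xs. \<forall>i. count_list xs i = \<gamma> i) (\<lambda>y. snd t y * f y) y)"
        by (rule pdl_sum_list[where F="\<lambda>t y. snd t y * f y"]) (use sm in simp)
      then show ?thesis unfolding partial_def using \<open>(\<lambda>y. pcoef ops \<gamma> y * f y) = _\<close> by simp
    qed
    also have "\<dots> = (\<Sum>t\<leftarrow>?F. pdl (fst t) (\<lambda>y. snd t y * f y) x)"
    proof (intro arg_cong[where f=sum_list] map_cong refl)
      fix t assume t: "t \<in> set ?F"
      then have "count_list (fst t) = \<gamma>" by simp
      then show "pdl (SOME xs. \<forall>i. count_list xs i = \<gamma> i) (\<lambda>y. snd t y * f y) x = pdl (fst t) (\<lambda>y. snd t y * f y) x"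
        using partial_eq[OF sm[OF t], of "fst t"] unfolding partial_def by simp
    qed
    finally show ?thesis .
  qed
  then have "(\<Sum>\<gamma>\<in>{\<gamma>. mi_norm \<gamma> \<le> N}. partial \<gamma> (\<lambda>y. pcoef ops \<gamma> y * f y) x) =
      (\<Sum>\<gamma>\<in>{\<gamma>. mi_norm \<gamma> \<le> N}. \<Sum>t\<leftarrow>filter (\<lambda>t. count_list (fst t) = \<gamma>) ops. pdl (fst t) (\<lambda>y. snd t y * f y) x)"
    by simp
  also have "\<dots> = (\<Sum>t\<leftarrow>ops. pdl (fst t) (\<lambda>y. snd t y * f y) x)"
    by (rule sum_filter_group[OF finite_mi]) (use assms(3) in \<open>auto simp: mi_norm_count\<close>)
  finally show ?thesis unfolding Dop_def by simp
qed

lemma const_sum: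
  "(\<forall>t\<in>set ts. \<exists>c. snd t = (\<lambda>x. c * H x)) \<Longrightarrow> \<exists>a. (\<lambda>x. \<Sum>t\<leftarrow>ts. snd t x) = (\<lambda>x. a * (H x :: complex))"
proof (induction ts)
  case Nil
  then show ?case by (intro exI[of _ 0]) simp
next
  case (Cons t ts)
  then obtain a where a: "(\<lambda>x. \<Sum>t\<leftarrow>ts. snd t x) = (\<lambda>x. a * H x)" by auto
  obtain c where c: "snd t = (\<lambda>x. c * H x)" using Cons.prems by auto
  have "(\<lambda>x. \<Sum>t\<leftarrow>t # ts. snd t x) = (\<lambda>x. (c + a) * H x)"
    using a c by (simp add: fun_eq_iff distrib_right)
  then show ?case by blast
qed

theorem corollary5p5:
  fixes n :: nat
  shows "\<exists>p :: ('d::finite \<Rightarrow> nat) \<Rightarrow> (real^'d \<Rightarrow> complex).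
    (\<forall>\<gamma>. mi_norm \<gamma> \<le> 2*n \<longrightarrow> poly_deg_lt (4*n + 1) (p \<gamma>)) \<and>
    (\<forall>\<gamma>. mi_norm \<gamma> = 2*n \<longrightarrow> (\<exists>a. p \<gamma> = (\<lambda>x. a * h_pow (4*n) x))) \<and>
    (\<forall>\<gamma>. mi_norm \<gamma> < 2*n \<longrightarrow> poly_deg_lt (4*n) (p \<gamma>)) \<and>
    (\<forall>f x. test_fun f \<longrightarrow> x \<noteq> 0 \<longrightarrow>
       U_op (one_minus_lap_pow n (U_op f)) x =
       (\<Sum>\<gamma>\<in>{\<gamma>. mi_norm \<gamma> \<le> 2*n}. partial \<gamma> (\<lambda>y. p \<gamma> y * f y) x))"
proof (intro exI[of _ "pcoef (opsN n)"] conjI allI impI)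
  have PW: "PW (2*n) (opsN n :: ('d list \<times> (real^'d \<Rightarrow> complex)) list)" by (rule PW_opsN)
  have LB: "LB (2*n) (4*n) (opsN n :: ('d list \<times> (real^'d \<Rightarrow> complex)) list)" by (rule LB_opsN)
  {
    fix \<gamma> :: "'d \<Rightarrow> nat" and M assume M: "2*n + mi_norm \<gamma> \<le> M"
    have "PolyD M (pcoef (opsN n) \<gamma>)"
      unfolding pcoef_def
    proof (rule PolyD_sum_list)
      fix t assume "t \<in> set (filter (\<lambda>t. count_list (fst t) = \<gamma>) (opsN n))"
      then have t: "t \<in> set (opsN n)" "count_list (fst t) = \<gamma>" by auto
      then have "PolyD (2*n + length (fst t)) (snd t)" using PW unfolding PW_def by blast
      moreover have "length (fst t) = mi_norm \<gamma>" using t(2) mi_norm_count by metis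
      ultimately show "PolyD M (snd t)" using M by (auto intro: PolyD.pmono)
    qed
  } note P = this
  fix \<gamma> :: "'d \<Rightarrow> nat"
  {
    assume "mi_norm \<gamma> \<le> 2*n"
    then have "PolyD (4*n) (pcoef (opsN n) \<gamma>)" using P by simp
    then show "poly_deg_lt (4*n + 1) (pcoef (opsN n) \<gamma>)" using PolyD_poly by fastforce
  next
    assume a: "mi_norm \<gamma> = 2*n"
    have "\<forall>t\<in>set (filter (\<lambda>t. count_list (fst t) = \<gamma>) (opsN n)). \<exists>c. snd t = (\<lambda>x. c * h_pow (4*n) x)"
    proof
      fix t assume "t \<in> set (filter (\<lambda>t. count_list (fst t) = \<gamma>) (opsN n))"
      then have t: "t \<in> set (opsN n)" "count_list (fst t) = \<gamma>" by auto
      then have "length (fst t) = 2*n" using a mi_norm_count by metis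
      then show "\<exists>c. snd t = (\<lambda>x. c * h_pow (4*n) x)" using LB t(1) unfolding LB_def by blast
    qed
    then show "\<exists>a. pcoef (opsN n) \<gamma> = (\<lambda>x. a * h_pow (4*n) x)"
      unfolding pcoef_def by (rule const_sum)
  next
    assume a: "mi_norm \<gamma> < 2*n"
    then have "PolyD (4*n - 1) (pcoef (opsN n) \<gamma>)" using P by simp
    then have "poly_deg_lt (Suc (4*n - 1)) (pcoef (opsN n) \<gamma>)" by (rule PolyD_poly)
    then show "poly_deg_lt (4*n) (pcoef (opsN n) \<gamma>)" using a by simp
  }
next
  fix f :: "real^'d \<Rightarrow> complex" and x :: "real^'d"
  assume f: "test_fun f" and x: "x \<noteq> 0"
  have sf: "smooth_fun f" using f unfolding test_fun_def by blast
  have "U_op (one_minus_lap_pow n (U_op f)) x = Dop (opsN n) f x"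
    unfolding iter[OF f] using U_U[OF x] by simp
  also have "\<dots> = (\<Sum>\<gamma>\<in>{\<gamma>. mi_norm \<gamma> \<le> 2*n}. partial \<gamma> (\<lambda>y. pcoef (opsN n) \<gamma> y * f y) x)"
    by (rule regroup[OF cs_opsN sf]) (use LB_opsN[of n] in \<open>auto simp: LB_def\<close>)
  finally show "U_op (one_minus_lap_pow n (U_op f)) x = (\<Sum>\<gamma>\<in>{\<gamma>. mi_norm \<gamma> \<le> 2*n}. partial \<gamma> (\<lambda>y. pcoef (opsN n) \<gamma> y * f y) x)" .
qed

end
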